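(* Consider a multilayer network with $M$ layers, where layer $h\in\{1,\dots,M\}$ has $N_h$ nodes, node set $V=\{(i,h): h=1,\dots,M,\ i=1,\dots,N_h\}$, and nonnegative weights $w_{ij}(hk)$ between node $i$ of layer $h$ and node $j$ of layer $k$; assume the network is weighted, undirected and connected, so that the multilayer Laplacian $\mathcal{L}$ (defined in the context) is symmetric. Let $f_{ih}:\mathbb{R}\to\mathbb{R}$, $(i,h)\in V$, and suppose $\tilde f(Y)=\sum_{(i,h)\in V} f_{ih}(y_{ih})$, $Y=(y_{ih})\in\mathbb{R}^V$, is a twice continuously differentiable convex function. Consider the saddle-point dynamics $$\dot Y(t)=-\nabla\tilde f(Y(t))-\mathcal{L}Y(t)-\mathcal{L}\Lambda(t),\qquad \dot\Lambda(t)=\mathcal{L}Y(t),$$ with $Y(t),\Lambda(t)\in\mathbb{R}^V$, which is the saddle-point flow of the augmented Lagrangian $\mathcal{L}_m(Y,\Lambda)=\tilde f(Y)+\langle\Lambda,\mathcal{L}Y\rangle+\tfrac12\langle Y,\mathcal{L}Y\rangle$. Then every trajectory $(Y(t),\Lambda(t))$ converges to a unique saddle point $(Y^\star,\Lambda^\star)$ of $\mathcal{L}_m$, characterized by: (1) $Y^\star=x^\star U$, where $x^\star\in\mathbb{R}$ is an optimizer of the primal problem $\min_{x\in\mathbb{R}}\sum_{(i,h)\in V}f_{ih}(x)$; (2) $\Lambda^\star=\bar\Lambda+\operatorname{average}(\Lambda_0)\,U$, where $\operatorname{average}(\Lambda_0)=\frac{1}{|V|}\sum_{(i,h)\in V}\Lambda_{ih}(0)$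 and $\bar\Lambda\in\mathbb{R}^V$ with $\bar\Lambda\perp U$ satisfies $\mathcal{L}\bar\Lambda+\nabla\tilde f(Y^\star)=0$.
   Context: $U\in\mathbb{R}^V$ is the all-ones tensor. For $T\in\mathbb{R}^V$, $(\mathcal{L}T)_{ih}=\sum_{k=1}^M\sum_{j=1}^{N_k} l_{ij}(hk)\,t_{jk}$, where $l_{ij}(hk)=\Big[\sum_{n=1}^M\sum_{m=1}^{N_n} w_{mi}(nh)\Big]\delta_{ij}\delta_{hk}-w_{ij}(hk)$ (the multilayer combinatorial Laplacian tensor; $\delta$ is the Kronecker delta). Undirected means $w_{ij}(hk)=w_{ji}(kh)$; connected means the graph on $V$ with an edge between $(i,h)$ and $(j,k)$ whenever $w_{ij}(hk)>0$ is connected. $\langle A,B\rangle=\sum_{(i,h)\in V}a_{ih}b_{ih}$, and $\bar\Lambda\perp U$ means $\langle\bar\Lambda,U\rangle=0$. $\nabla\tilde f(Y)$ has components $f_{ih}'(y_{ih})$. A saddle point of $\mathcal{L}_m$ is a solution of $\min_Y\max_\Lambda\mathcal{L}_m(Y,\Lambda)$. *)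

theory Defs
  imports "HOL-Analysis.Analysis"
begin

type_synonym node = "nat \<times> nat"   (* (i,h): node i of layer h *)
type_synonym tensor = "node \<Rightarrow> real"  (* element of R^V; values off V are irrelevant *)

definition nodes :: "nat \<Rightarrow> (nat \<Rightarrow> nat) \<Rightarrow> node set" where
  "nodes M N = {(i,h). 1 \<le> h \<and> h \<le> M \<and> 1 \<le> i \<and> i \<le> N h}"

text \<open>Weights: w i j h k is the weight between node i of layer h and node j of layer k.\<close>

definition ml_laplacian ::
  "node set \<Rightarrow> (nat \<Rightarrow> nat \<Rightarrow> nat \<Rightarrow> nat \<Rightarrow> real) \<Rightarrow> tensor \<Rightarrow> tensor" where
  "ml_laplacian V w T = (\<lambda>(i,h). \<Sum>(j,k)\<in>V.
      ((\<Sum>(m,n)\<in>V. w m i n h) * (if i = j then 1 else 0) * (if h = k then 1 else 0)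
        - w i j h k) * T (j,k))"

definition ml_undirected :: "node set \<Rightarrow> (nat \<Rightarrow> nat \<Rightarrow> nat \<Rightarrow> nat \<Rightarrow> real) \<Rightarrow> bool" where
  "ml_undirected V w = (\<forall>(i,h)\<in>V. \<forall>(j,k)\<in>V. w i j h k = w j i k h)"

definition ml_connected :: "node set \<Rightarrow> (nat \<Rightarrow> nat \<Rightarrow> nat \<Rightarrow> nat \<Rightarrow> real) \<Rightarrow> bool" where
  "ml_connected V w = (\<forall>a\<in>V. \<forall>b\<in>V.
      (a, b) \<in> {((i,h),(j,k)). (i,h) \<in> V \<and> (j,k) \<in> V \<and> w i j h k > 0}\<^sup>*)"

definition ones :: tensor where "ones = (\<lambda>_. 1)"

definition ml_inner :: "node set \<Rightarrow> tensor \<Rightarrow> tensor \<Rightarrow> real" where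
  "ml_inner V A B = (\<Sum>v\<in>V. A v * B v)"

definition ftilde :: "node set \<Rightarrow> (node \<Rightarrow> real \<Rightarrow> real) \<Rightarrow> tensor \<Rightarrow> real" where
  "ftilde V f Y = (\<Sum>v\<in>V. f v (Y v))"

definition grad_ftilde :: "(node \<Rightarrow> real \<Rightarrow> real) \<Rightarrow> tensor \<Rightarrow> tensor" where
  "grad_ftilde f Y = (\<lambda>v. deriv (f v) (Y v))"

definition ftilde_convex :: "node set \<Rightarrow> (node \<Rightarrow> real \<Rightarrow> real) \<Rightarrow> bool" where
  "ftilde_convex V f = (\<forall>Y Z. \<forall>t\<in>{0..1::real}.
     ftilde V f (\<lambda>v. (1 - t) * Y v + t * Z v) \<le> (1 - t) * ftilde V f Y + t * ftilde V f Z)"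

definition aug_lagrangian ::
  "node set \<Rightarrow> (nat \<Rightarrow> nat \<Rightarrow> nat \<Rightarrow> nat \<Rightarrow> real) \<Rightarrow> (node \<Rightarrow> real \<Rightarrow> real)
     \<Rightarrow> tensor \<Rightarrow> tensor \<Rightarrow> real" where
  "aug_lagrangian V w f Y Lam = ftilde V f Y + ml_inner V Lam (ml_laplacian V w Y)
      + 1/2 * ml_inner V Y (ml_laplacian V w Y)"

definition is_saddle_point ::
  "node set \<Rightarrow> (nat \<Rightarrow> nat \<Rightarrow> nat \<Rightarrow> nat \<Rightarrow> real) \<Rightarrow> (node \<Rightarrow> real \<Rightarrow> real)
     \<Rightarrow> tensor \<Rightarrow> tensor \<Rightarrow> bool" where
  "is_saddle_point V w f Ys Ls =
     (\<forall>Y Lam. aug_lagrangian V w f Ys Lam \<le> aug_lagrangian V w f Ys Ls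
            \<and> aug_lagrangian V w f Ys Ls \<le> aug_lagrangian V w f Y Ls)"

end

theory Submission
  imports Defs "Jordan_Normal_Form.Determinant"
begin


lemma solve_lin:
  fixes V :: "'a set" and c :: "'a \<Rightarrow> 'a \<Rightarrow> real" and r :: "'a \<Rightarrow> real"
  assumes fin: "finite V"
    and inj: "\<And>x. (\<forall>a\<in>V. (\<Sum>b\<in>V. c a b * x b) = 0) \<Longrightarrow> \<forall>a\<in>V. x a = 0"
  shows "\<exists>x. \<forall>a\<in>V. (\<Sum>b\<in>V. c a b * x b) = r a"
proof -
  define n where "n = card V"
  obtain h where bij: "bij_betw h {0..<n} V" using ex_bij_betw_nat_finite[OF fin] n_def by blast
  define hi where "hi = the_inv_into {0..<n} h"
  have hi_h: "hi (h i) = i" if "i < n" for i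
    using bij that unfolding hi_def by (simp add: bij_betw_def the_inv_into_f_f)
  have h_hi: "h (hi a) = a" "hi a < n" if "a \<in> V" for a
    using bij that unfolding hi_def
    by (auto simp: bij_betw_def f_the_inv_into_f the_inv_into_f_f)
  define A where "A = mat n n (\<lambda>(i,j). c (h i) (h j))"
  have A: "A \<in> carrier_mat n n" by (simp add: A_def)
  define xv where "xv v = (\<lambda>a. v $ (hi a))" for v :: "real vec"
  have key: "(\<Sum>b\<in>V. c a b * xv v b) = (\<Sum>j\<in>{0..<n}. c a (h j) * v $ j)" for a v
  proof -
    have "(\<Sum>b\<in>V. c a b * xv v b) = (\<Sum>j\<in>{0..<n}. c a (h j) * xv v (h j))"
      using sum.reindex_bij_betw[OF bij, of "\<lambda>b. c a b * xv v b"] by simp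
    also have "\<dots> = (\<Sum>j\<in>{0..<n}. c a (h j) * v $ j)"
      by (rule sum.cong) (auto simp: xv_def hi_h)
    finally show ?thesis .
  qed
  have Av: "(A *\<^sub>v v) $ i = (\<Sum>j\<in>{0..<n}. c (h i) (h j) * v $ j)" if "i < n" "v \<in> carrier_vec n" for i v
    using that by (simp add: A_def mult_mat_vec_def scalar_prod_def row_def)
  have "det A \<noteq> 0"
  proof
    assume "det A = 0"
    then obtain v where v: "v \<in> carrier_vec n" "v \<noteq> 0\<^sub>v n" "A *\<^sub>v v = 0\<^sub>v n"
      using det_0_iff_vec_prod_zero[OF A] by blast
    have "\<forall>a\<in>V. (\<Sum>b\<in>V. c a b * xv v b) = 0"
    proof
      fix a assume a: "a \<in> V"
      have "(\<Sum>b\<in>V. c a b * xv v b) = (A *\<^sub>v v) $ (hi a)"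
        using key[of a v] Av[OF h_hi(2)[OF a] v(1)] h_hi(1)[OF a] by simp
      also have "\<dots> = 0" using v(3) h_hi(2)[OF a] by simp
      finally show "(\<Sum>b\<in>V. c a b * xv v b) = 0" .
    qed
    from inj[OF this] have "\<forall>a\<in>V. xv v a = 0" .
    then have "\<forall>j<n. v $ j = 0"
      using bij hi_h unfolding xv_def bij_betw_def by force
    then have "v = 0\<^sub>v n" using v(1) by (intro eq_vecI) auto
    with v(2) show False by simp
  qed
  from det_non_zero_imp_unit[OF A this, of "()"]
  obtain B where B: "B \<in> carrier_mat n n" "A * B = 1\<^sub>m n"
    unfolding Units_def ring_mat_def by auto
  define rv where "rv = vec n (\<lambda>i. r (h i))"
  define v where "v = B *\<^sub>v rv"
  have vc: "v \<in> carrier_vec n" using B by (simp add: v_def rv_def)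
  have "A *\<^sub>v v = rv"
  proof -
    have rc: "rv \<in> carrier_vec n" by (simp add: rv_def)
    have "A *\<^sub>v v = (A * B) *\<^sub>v rv" unfolding v_def using assoc_mult_mat_vec[OF A B(1) rc] by simp
    then show ?thesis using B(2) rc by simp
  qed
  show ?thesis
  proof (intro exI ballI)
    fix a assume a: "a \<in> V"
    have "(\<Sum>b\<in>V. c a b * xv v b) = (A *\<^sub>v v) $ (hi a)"
      using key[of a v] Av[OF h_hi(2)[OF a] vc] h_hi(1)[OF a] by simp
    also have "\<dots> = r a" using \<open>A *\<^sub>v v = rv\<close> h_hi[OF a] by (simp add: rv_def)
    finally show "(\<Sum>b\<in>V. c a b * xv v b) = r a" .
  qed
qed



lemma rtrancl_edge_prop:
  assumes "(a,b) \<in> R\<^sup>*" and "\<And>x. P x x" and "\<And>x y z. P x y \<Longrightarrow> (y,z) \<in> R \<Longrightarrow> P x z"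
  shows "P a b"
  using assms(1) by (induction rule: rtrancl_induct) (use assms in auto)

locale graph =
  fixes V :: "'a set" and W :: "'a \<Rightarrow> 'a \<Rightarrow> real"
  assumes fin: "finite V" and ne: "V \<noteq> {}"
  and sym: "\<And>a b. a\<in>V \<Longrightarrow> b\<in>V \<Longrightarrow> W a b = W b a"
  and nonneg: "\<And>a b. a\<in>V \<Longrightarrow> b\<in>V \<Longrightarrow> W a b \<ge> 0"
  and conn: "\<And>a b. a\<in>V \<Longrightarrow> b\<in>V \<Longrightarrow> (a,b) \<in> {(x,y). x\<in>V \<and> y\<in>V \<and> W x y > 0}\<^sup>*"
begin

definition Lp :: "('a \<Rightarrow> real) \<Rightarrow> 'a \<Rightarrow> real" where
  "Lp x a = (\<Sum>b\<in>V. W a b * (x a - x b))"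

lemma Lp_alt: "Lp x a = (\<Sum>b\<in>V. W a b) * x a - (\<Sum>b\<in>V. W a b * x b)"
  unfolding Lp_def sum_distrib_right sum_subtractf[symmetric] by (rule sum.cong) (auto simp: algebra_simps)

lemma Lp_diff: "Lp (\<lambda>v. x v - y v) a = Lp x a - Lp y a"
  unfolding Lp_def sum_subtractf[symmetric] by (rule sum.cong) (auto simp: algebra_simps)

lemma Lp_add: "Lp (\<lambda>v. x v + y v) a = Lp x a + Lp y a"
  unfolding Lp_def sum.distrib[symmetric] by (rule sum.cong) (auto simp: algebra_simps)

lemma Lp_const: "Lp (\<lambda>v. c) a = 0"
  unfolding Lp_def by simp

lemma Lp_shift: "Lp (\<lambda>v. x v + c) a = Lp x a"
  unfolding Lp_def by simp

lemma Lp_shift2: "Lp (\<lambda>v. x v - c) a = Lp x a"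
  unfolding Lp_def by simp

lemma Lp_cong: "(\<And>v. v \<in> V \<Longrightarrow> x v = y v) \<Longrightarrow> a \<in> V \<Longrightarrow> Lp x a = Lp y a"
  unfolding Lp_def by (intro sum.cong) auto

lemma double_swap:
  "(\<Sum>a\<in>V. \<Sum>b\<in>V. F a b) = (\<Sum>a\<in>V. \<Sum>b\<in>V. F b a)"
  by (rule sum.swap)

lemma Lp_sum0: "(\<Sum>a\<in>V. Lp x a) = 0"
proof -
  have "(\<Sum>a\<in>V. Lp x a) = (\<Sum>a\<in>V. \<Sum>b\<in>V. W a b * (x a - x b))" unfolding Lp_def ..
  also have "\<dots> = (\<Sum>a\<in>V. \<Sum>b\<in>V. W b a * (x b - x a))" by (rule sum.swap)
  also have "\<dots> = (\<Sum>a\<in>V. \<Sum>b\<in>V. - (W a b * (x a - x b)))"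
    by (intro sum.cong refl) (simp add: sym algebra_simps)
  also have "\<dots> = - (\<Sum>a\<in>V. Lp x a)" unfolding Lp_def by (simp add: sum_negf)
  finally show ?thesis by simp
qed

lemma Lp_sym: "(\<Sum>a\<in>V. x a * Lp y a) = (\<Sum>a\<in>V. y a * Lp x a)"
proof -
  have e: "(\<Sum>a\<in>V. x a * Lp y a) = (\<Sum>a\<in>V. \<Sum>b\<in>V. W a b * x a * y a) - (\<Sum>a\<in>V. \<Sum>b\<in>V. W a b * x a * y b)"
    for x y unfolding Lp_def by (simp add: sum_distrib_left algebra_simps sum_subtractf)
  have s: "(\<Sum>a\<in>V. \<Sum>b\<in>V. W a b * x a * y b) = (\<Sum>a\<in>V. \<Sum>b\<in>V. W a b * y a * x b)"
  proof -
    have "(\<Sum>a\<in>V. \<Sum>b\<in>V. W a b * x a * y b) = (\<Sum>a\<in>V. \<Sum>b\<in>V. W b a * x b * y a)" by (rule sum.swap)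
    also have "\<dots> = (\<Sum>a\<in>V. \<Sum>b\<in>V. W a b * y a * x b)"
      by (intro sum.cong refl) (simp add: sym)
    finally show ?thesis .
  qed
  show ?thesis unfolding e s by (simp add: mult.commute mult.left_commute)
qed

lemma Lp_quad: "(\<Sum>a\<in>V. x a * Lp x a) = (\<Sum>a\<in>V. \<Sum>b\<in>V. W a b * (x a - x b)^2) / 2"
proof -
  have 1: "(\<Sum>a\<in>V. x a * Lp x a) = (\<Sum>a\<in>V. \<Sum>b\<in>V. W a b * x a * (x a - x b))"
    unfolding Lp_def by (simp add: sum_distrib_left algebra_simps)
  have 2: "(\<Sum>a\<in>V. \<Sum>b\<in>V. W a b * x a * (x a - x b)) = (\<Sum>a\<in>V. \<Sum>b\<in>V. W a b * x b * (x b - x a))"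
  proof -
    have "(\<Sum>a\<in>V. \<Sum>b\<in>V. W a b * x a * (x a - x b)) = (\<Sum>a\<in>V. \<Sum>b\<in>V. W b a * x b * (x b - x a))" by (rule sum.swap)
    also have "\<dots> = (\<Sum>a\<in>V. \<Sum>b\<in>V. W a b * x b * (x b - x a))"
      by (intro sum.cong refl) (simp add: sym)
    finally show ?thesis .
  qed
  have 3: "(\<Sum>a\<in>V. \<Sum>b\<in>V. W a b * x a * (x a - x b)) + (\<Sum>a\<in>V. \<Sum>b\<in>V. W a b * x b * (x b - x a))
      = (\<Sum>a\<in>V. \<Sum>b\<in>V. W a b * (x a - x b)^2)"
    by (simp add: sum.distrib[symmetric] power2_eq_square algebra_simps)
  show ?thesis using 1 2 3 by simp
qed

lemma quad_nonneg: "0 \<le> (\<Sum>a\<in>V. x a * Lp x a)"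
  unfolding Lp_quad by (intro divide_nonneg_pos sum_nonneg mult_nonneg_nonneg) (auto simp: nonneg)

lemma edge_le_quad:
  assumes "a \<in> V" "b \<in> V"
  shows "W a b * (x a - x b)^2 \<le> 2 * (\<Sum>a\<in>V. x a * Lp x a)"
proof -
  have "W a b * (x a - x b)^2 \<le> (\<Sum>b\<in>V. W a b * (x a - x b)^2)"
    by (rule member_le_sum) (use assms fin in \<open>auto simp: nonneg\<close>)
  also have "\<dots> \<le> (\<Sum>a\<in>V. \<Sum>b\<in>V. W a b * (x a - x b)^2)"
    by (rule member_le_sum) (use assms fin in \<open>auto intro!: sum_nonneg simp: nonneg\<close>)
  finally show ?thesis unfolding Lp_quad by simp
qed

lemma conn_prop:
  assumes "\<And>x. P x x" "\<And>x y z. P x y \<Longrightarrow> y \<in> V \<Longrightarrow> z \<in> V \<Longrightarrow> W y z > 0 \<Longrightarrow> P x z"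
    "a \<in> V" "b \<in> V"
  shows "P a b"
  using rtrancl_edge_prop[OF conn[OF assms(3,4)], of P] assms(1,2) by blast

lemma quad0_const:
  assumes "(\<Sum>a\<in>V. x a * Lp x a) = 0" "a \<in> V" "b \<in> V"
  shows "x a = x b"
proof -
  have e: "x y = x z" if "y \<in> V" "z \<in> V" "W y z > 0" for y z
  proof -
    have "W y z * (x y - x z)^2 \<le> 0" using edge_le_quad[OF that(1,2), of x] assms(1) by simp
    moreover have "0 \<le> W y z * (x y - x z)^2" using that by simp
    ultimately have "W y z * (x y - x z)^2 = 0" by linarith
    then show ?thesis using that(3) by simp
  qed
  show ?thesis by (rule conn_prop[where P="\<lambda>a b. x a = x b"]) (use e assms in auto)
qed

lemma conn_tendsto:
  fixes X :: "'b \<Rightarrow> 'a \<Rightarrow> real"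
  assumes "\<And>y z. y \<in> V \<Longrightarrow> z \<in> V \<Longrightarrow> W y z > 0 \<Longrightarrow> ((\<lambda>t. X t y - X t z) \<longlongrightarrow> 0) F"
    "a \<in> V" "b \<in> V"
  shows "((\<lambda>t. X t a - X t b) \<longlongrightarrow> 0) F"
proof (rule conn_prop[where P="\<lambda>a b. ((\<lambda>t. X t a - X t b) \<longlongrightarrow> 0) F"])
  fix x y z assume h: "((\<lambda>t. X t x - X t y) \<longlongrightarrow> 0) F" "y \<in> V" "z \<in> V" "W y z > 0"
  have "((\<lambda>t. (X t x - X t y) + (X t y - X t z)) \<longlongrightarrow> 0 + 0) F"
    by (intro tendsto_add h(1) assms(1) h(2-4))
  then show "((\<lambda>t. X t x - X t z) \<longlongrightarrow> 0) F" by simp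
qed (use assms in auto)

lemma solve:
  assumes "(\<Sum>a\<in>V. r a) = 0"
  shows "\<exists>x. \<forall>a\<in>V. Lp x a = r a"
proof -
  define c where "c a b = (if a = b then (\<Sum>d\<in>V. W a d) else 0) - W a b + 1" for a b
  have ce: "(\<Sum>b\<in>V. c a b * x b) = Lp x a + (\<Sum>b\<in>V. x b)" if "a \<in> V" for a x
  proof -
    have "(\<Sum>b\<in>V. c a b * x b) = (\<Sum>b\<in>V. (if a = b then (\<Sum>d\<in>V. W a d) * x b else 0)) - (\<Sum>b\<in>V. W a b * x b) + (\<Sum>b\<in>V. x b)"
    proof -
      have "(\<Sum>b\<in>V. c a b * x b) = (\<Sum>b\<in>V. ((if a = b then (\<Sum>d\<in>V. W a d) * x b else 0) - W a b * x b) + x b)"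
        unfolding c_def by (rule sum.cong) (auto simp: algebra_simps)
      then show ?thesis by (simp only: sum.distrib sum_subtractf)
    qed
    also have "(\<Sum>b\<in>V. (if a = b then (\<Sum>d\<in>V. W a d) * x b else 0)) = (\<Sum>d\<in>V. W a d) * x a"
      using that fin by (simp add: sum.delta)
    finally show ?thesis by (simp add: Lp_alt)
  qed
  have cardpos: "card V > 0" using fin ne by (simp add: card_gt_0_iff)
  have sumeq: "(\<Sum>b\<in>V. x b) = 0" if "\<forall>a\<in>V. Lp x a + (\<Sum>b\<in>V. x b) = r a" for x
  proof -
    have "(\<Sum>a\<in>V. Lp x a + (\<Sum>b\<in>V. x b)) = (\<Sum>a\<in>V. r a)" using that by simp
    then have "real (card V) * (\<Sum>b\<in>V. x b) = 0" using assms by (simp add: sum.distrib Lp_sum0)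
    then show ?thesis using cardpos by simp
  qed
  have inj: "\<forall>a\<in>V. x a = 0" if h: "\<forall>a\<in>V. (\<Sum>b\<in>V. c a b * x b) = 0" for x
  proof -
    have h2: "\<forall>a\<in>V. Lp x a + (\<Sum>b\<in>V. x b) = 0" using h ce by simp
    have s0: "(\<Sum>b\<in>V. x b) = 0"
    proof -
      have "(\<Sum>a\<in>V. Lp x a + (\<Sum>b\<in>V. x b)) = 0" using h2 by simp
      then have "real (card V) * (\<Sum>b\<in>V. x b) = 0" by (simp add: sum.distrib Lp_sum0)
      then show ?thesis using cardpos by simp
    qed
    have lp0: "\<forall>a\<in>V. Lp x a = 0" using h2 s0 by simp
    have q0: "(\<Sum>a\<in>V. x a * Lp x a) = 0" using lp0 by simp
    obtain a0 where a0: "a0 \<in> V" using ne by blast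
    have cst: "\<forall>a\<in>V. x a = x a0" using quad0_const[OF q0 _ a0] by blast
    have "(\<Sum>b\<in>V. x b) = real (card V) * x a0" using cst by simp
    then have "x a0 = 0" using s0 cardpos by simp
    then show ?thesis using cst by simp
  qed
  obtain x where x: "\<forall>a\<in>V. (\<Sum>b\<in>V. c a b * x b) = r a"
    using solve_lin[OF fin inj] by blast
  then have x2: "\<forall>a\<in>V. Lp x a + (\<Sum>b\<in>V. x b) = r a" using ce by simp
  then have "\<forall>a\<in>V. Lp x a = r a" using sumeq[OF x2] by simp
  then show ?thesis by blast
qed

end



lemma mvt0:
  fixes h h' :: "real \<Rightarrow> real"
  assumes "0 \<le> a" "a \<le> b" "\<And>t. t \<ge> 0 \<Longrightarrow> (h has_real_derivative h' t) (at t within {0..})"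
  shows "\<exists>x\<in>{a..b}. h b - h a = h' x * (b - a)"
proof -
  have "\<exists>x\<in>{a..b}. h b - h a = (\<lambda>d. h' x * d) (b - a)"
  proof (rule mvt_very_simple[OF assms(2)])
    fix x assume x: "a \<le> x" "x \<le> b"
    have "(h has_real_derivative h' x) (at x within {a..b})"
      by (rule DERIV_subset[OF assms(3)]) (use x assms(1) in auto)
    then show "(h has_derivative (\<lambda>d. h' x * d)) (at x within {a..b})"
      using has_field_derivative_imp_has_derivative by blast
  qed
  then show ?thesis by simp
qed

lemma mvt_bound:
  fixes h h' :: "real \<Rightarrow> real"
  assumes "0 \<le> a" "a \<le> b" "\<And>t. t \<ge> 0 \<Longrightarrow> (h has_real_derivative h' t) (at t within {0..})"
    and "\<And>x. a \<le> x \<Longrightarrow> x \<le> b \<Longrightarrow> \<bar>h' x\<bar> \<le> K"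
  shows "\<bar>h b - h a\<bar> \<le> K * (b - a)"
proof -
  obtain x where x: "x \<in> {a..b}" "h b - h a = h' x * (b - a)" using mvt0[OF assms(1-3)] by blast
  have "\<bar>h' x * (b - a)\<bar> = \<bar>h' x\<bar> * (b - a)" using assms(2) by (simp add: abs_mult)
  also have "\<dots> \<le> K * (b - a)" using assms(4)[of x] x(1) assms(2) by (intro mult_right_mono) auto
  finally show ?thesis using x(2) by simp
qed

lemma mvt_lip:
  fixes h h' :: "real \<Rightarrow> real"
  assumes "\<And>t. t \<ge> 0 \<Longrightarrow> (h has_real_derivative h' t) (at t within {0..})"
    and "\<And>x. x \<ge> N \<Longrightarrow> \<bar>h' x\<bar> \<le> K" and "N \<ge> 0" "s \<ge> N" "t \<ge> N"
  shows "\<bar>h t - h s\<bar> \<le> K * \<bar>t - s\<bar>"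
proof (cases "s \<le> t")
  case True
  then show ?thesis using mvt_bound[of s t h h' K] assms by auto
next
  case False
  then have "\<bar>h s - h t\<bar> \<le> K * (s - t)" using mvt_bound[of t s h h' K] assms by auto
  then show ?thesis using False by (simp add: abs_minus_commute)
qed

lemma decr:
  fixes h h' :: "real \<Rightarrow> real"
  assumes "\<And>t. t \<ge> 0 \<Longrightarrow> (h has_real_derivative h' t) (at t within {0..})"
    and "\<And>t. t \<ge> 0 \<Longrightarrow> h' t \<le> 0" and "0 \<le> a" "a \<le> b"
  shows "h b \<le> h a"
proof -
  obtain x where x: "x \<in> {a..b}" "h b - h a = h' x * (b - a)" using mvt0[OF assms(3,4,1)] by blast
  have "h' x * (b - a) \<le> 0" using assms(2)[of x] x(1) assms(3,4) by (intro mult_nonpos_nonneg) auto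
  then show ?thesis using x(2) by simp
qed

lemma barbalat:
  fixes Vf phi :: "real \<Rightarrow> real"
  assumes der: "\<And>t. t \<ge> 0 \<Longrightarrow> (Vf has_real_derivative - phi t) (at t within {0..})"
    and pn: "\<And>t. t \<ge> 0 \<Longrightarrow> phi t \<ge> 0" and vn: "\<And>t. t \<ge> 0 \<Longrightarrow> Vf t \<ge> 0"
    and lip: "\<And>s t. s \<ge> 0 \<Longrightarrow> t \<ge> 0 \<Longrightarrow> \<bar>phi t - phi s\<bar> \<le> K * \<bar>t - s\<bar>" and K: "K \<ge> 0"
  shows "(phi \<longlongrightarrow> 0) at_top"
proof (rule ccontr)
  assume nt: "\<not> (phi \<longlongrightarrow> 0) at_top"
  then obtain e where e: "e > 0" "\<not> eventually (\<lambda>t. dist (phi t) 0 < e) at_top"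
    unfolding tendsto_iff by blast
  have big: "\<exists>t\<ge>N. phi t \<ge> e" for N
  proof (rule ccontr)
    assume "\<not> (\<exists>t\<ge>N. phi t \<ge> e)"
    then have "\<forall>t\<ge>max N 0. dist (phi t) 0 < e" using pn by (auto simp: dist_real_def)
    then have "eventually (\<lambda>t. dist (phi t) 0 < e) at_top" unfolding eventually_at_top_linorder by blast
    with e show False by simp
  qed
  define d where "d = e / (2 * K + 1)"
  have dpos: "d > 0" using e K by (simp add: d_def)
  have Kd: "K * d \<le> e / 2" using e K unfolding d_def by (simp add: field_simps)
  define c where "c = d * e / 2"
  have cpos: "c > 0" using dpos e by (simp add: c_def)
  have dec: "Vf b \<le> Vf a" if "0 \<le> a" "a \<le> b" for a b
    by (rule decr[OF der _ that]) (use pn in auto)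
  have drop: "Vf (t + d) \<le> Vf t - c" if t: "t \<ge> 0" "phi t \<ge> e" for t
  proof -
    obtain x where x: "x \<in> {t..t+d}" "Vf (t + d) - Vf t = - phi x * (t + d - t)"
      using mvt0[OF t(1) _ der, of "t + d"] dpos by auto
    have "\<bar>phi x - phi t\<bar> \<le> K * \<bar>x - t\<bar>" using lip[of t x] x(1) t by auto
    also have "\<dots> \<le> K * d" using x(1) K by (intro mult_left_mono) auto
    finally have "phi x \<ge> e / 2" using Kd t(2) by linarith
    then have "phi x * d \<ge> e / 2 * d" using dpos by (intro mult_right_mono) auto
    then show ?thesis using x(2) unfolding c_def by (simp add: algebra_simps)
  qed
  have step: "\<exists>t\<ge>0. Vf t \<le> Vf 0 - real k * c" for k
  proof (induction k)
    case 0 then show ?case by auto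
  next
    case (Suc k)
    then obtain t where t: "t \<ge> 0" "Vf t \<le> Vf 0 - real k * c" by blast
    obtain t' where t': "t' \<ge> t" "phi t' \<ge> e" using big by blast
    have "Vf (t' + d) \<le> Vf t' - c" using drop[OF _ t'(2)] t t' by auto
    also have "\<dots> \<le> Vf t - c" using dec[of t t'] t t' by auto
    finally show ?case using t dpos t' by (intro exI[of _ "t' + d"]) (auto simp: algebra_simps)
  qed
  obtain k :: nat where k: "Vf 0 / c < real k" using reals_Archimedean2 by blast
  then have "Vf 0 < real k * c" using cpos by (simp add: field_simps)
  moreover obtain t where "t \<ge> 0" "Vf t \<le> Vf 0 - real k * c" using step[of k] by blast
  ultimately show False using vn[of t] by linarith
qed

lemma sq_tendsto0:
  fixes f :: "'b \<Rightarrow> real"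
  assumes "((\<lambda>t. (f t)^2) \<longlongrightarrow> 0) F"
  shows "(f \<longlongrightarrow> 0) F"
proof -
  have "((\<lambda>t. sqrt ((f t)^2)) \<longlongrightarrow> sqrt 0) F" by (rule tendsto_real_sqrt[OF assms])
  then have "((\<lambda>t. \<bar>f t\<bar>) \<longlongrightarrow> 0) F" by simp
  then show ?thesis using tendsto_rabs_zero_iff by blast
qed

lemma sandwich0:
  fixes f g :: "real \<Rightarrow> real"
  assumes "(g \<longlongrightarrow> 0) at_top" "\<And>t. t \<ge> N \<Longrightarrow> 0 \<le> f t" "\<And>t. t \<ge> N \<Longrightarrow> f t \<le> g t"
  shows "(f \<longlongrightarrow> 0) at_top"
proof (rule tendsto_sandwich[of "\<lambda>_. 0" f at_top g])
  show "eventually (\<lambda>t. 0 \<le> f t) at_top" using assms(2) unfolding eventually_at_top_linorder by blast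
  show "eventually (\<lambda>t. f t \<le> g t) at_top" using assms(3) unfolding eventually_at_top_linorder by blast
qed (use assms in auto)

lemma abs_le_sq: "\<bar>z::real\<bar> \<le> 1 + z^2"
proof (cases "\<bar>z\<bar> \<le> 1")
  case True
  then show ?thesis by (simp add: add_increasing2)
next
  case False
  then have "\<bar>z\<bar> * 1 \<le> \<bar>z\<bar> * \<bar>z\<bar>" by (intro mult_left_mono) auto
  also have "\<dots> = z^2" by (simp add: power2_eq_square)
  finally show ?thesis by simp
qed

lemma prod_diff_bound:
  fixes a b c d :: real
  shows "\<bar>a * b - c * d\<bar> \<le> \<bar>a - c\<bar> * \<bar>b\<bar> + \<bar>c\<bar> * \<bar>b - d\<bar>"
proof -
  have "a * b - c * d = (a - c) * b + c * (b - d)" by (simp add: algebra_simps)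
  then show ?thesis by (simp add: abs_mult[symmetric] abs_triangle_ineq)
qed

lemma sum_diff_bound:
  fixes f g :: "'a \<Rightarrow> real"
  assumes "\<And>v. v \<in> V \<Longrightarrow> \<bar>f v - g v\<bar> \<le> C"
  shows "\<bar>(\<Sum>v\<in>V. f v) - (\<Sum>v\<in>V. g v)\<bar> \<le> real (card V) * C"
proof -
  have "\<bar>(\<Sum>v\<in>V. f v) - (\<Sum>v\<in>V. g v)\<bar> = \<bar>\<Sum>v\<in>V. f v - g v\<bar>" by (simp add: sum_subtractf)
  also have "\<dots> \<le> (\<Sum>v\<in>V. \<bar>f v - g v\<bar>)" by (rule sum_abs)
  also have "\<dots> \<le> (\<Sum>v\<in>V. C)" using assms by (intro sum_mono) auto
  finally show ?thesis by simp
qed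




context graph begin

definition Wt where "Wt = (\<Sum>a\<in>V. \<Sum>b\<in>V. W a b)"

lemma Wt_nonneg: "Wt \<ge> 0"
  unfolding Wt_def by (intro sum_nonneg) (auto simp: nonneg)

lemma Lp_bound:
  assumes a: "a \<in> V" and xb: "\<And>b. b \<in> V \<Longrightarrow> \<bar>x b\<bar> \<le> r"
  shows "\<bar>Lp x a\<bar> \<le> 2 * r * Wt"
proof -
  have "\<bar>Lp x a\<bar> \<le> (\<Sum>b\<in>V. \<bar>W a b * (x a - x b)\<bar>)" unfolding Lp_def by (rule sum_abs)
  also have "\<dots> \<le> (\<Sum>b\<in>V. W a b * (2 * r))"
  proof (intro sum_mono)
    fix b assume b: "b \<in> V"
    have "\<bar>x a - x b\<bar> \<le> 2 * r" using xb[OF a] xb[OF b] by linarith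
    then show "\<bar>W a b * (x a - x b)\<bar> \<le> W a b * (2 * r)"
      using nonneg[OF a b] by (simp add: abs_mult mult_left_mono)
  qed
  also have "\<dots> = 2 * r * (\<Sum>b\<in>V. W a b)" by (simp add: sum_distrib_right mult.commute)
  also have "\<dots> \<le> 2 * r * Wt"
  proof -
    have "(\<Sum>b\<in>V. W a b) \<le> Wt" unfolding Wt_def
      by (rule member_le_sum[of a V "\<lambda>a. \<Sum>b\<in>V. W a b", OF a]) (auto intro!: sum_nonneg simp: nonneg fin)
    moreover have "r \<ge> 0" using xb[OF a] by linarith
    ultimately show ?thesis by (intro mult_left_mono) auto
  qed
  finally show ?thesis .
qed

lemma quad_tendsto:
  fixes X :: "'b \<Rightarrow> 'a \<Rightarrow> real"
  assumes q: "((\<lambda>t. \<Sum>a\<in>V. X t a * Lp (X t) a) \<longlongrightarrow> 0) F"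
  shows "\<And>a. a \<in> V \<Longrightarrow> ((\<lambda>t. Lp (X t) a) \<longlongrightarrow> 0) F"
    and "\<And>a b. a \<in> V \<Longrightarrow> b \<in> V \<Longrightarrow> ((\<lambda>t. X t a - X t b) \<longlongrightarrow> 0) F"
proof -
  have e1: "((\<lambda>t. W a b * (X t a - X t b)^2) \<longlongrightarrow> 0) F" if ab: "a \<in> V" "b \<in> V" for a b
  proof (rule tendsto_sandwich[of "\<lambda>_. 0" _ F "\<lambda>t. 2 * (\<Sum>a\<in>V. X t a * Lp (X t) a)"])
    show "eventually (\<lambda>t. 0 \<le> W a b * (X t a - X t b)^2) F"
      using nonneg[OF ab] by (intro always_eventually) auto
    show "eventually (\<lambda>t. W a b * (X t a - X t b)^2 \<le> 2 * (\<Sum>a\<in>V. X t a * Lp (X t) a)) F"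
      using edge_le_quad[OF ab] by (intro always_eventually) auto
    show "((\<lambda>t. 2 * (\<Sum>a\<in>V. X t a * Lp (X t) a)) \<longlongrightarrow> 0) F"
      using tendsto_mult_left[OF q, of 2] by simp
  qed auto
  have e2: "((\<lambda>t. W a b * (X t a - X t b)) \<longlongrightarrow> 0) F" if ab: "a \<in> V" "b \<in> V" for a b
  proof (rule sq_tendsto0)
    have "((\<lambda>t. W a b * (W a b * (X t a - X t b)^2)) \<longlongrightarrow> W a b * 0) F"
      by (rule tendsto_mult_left[OF e1[OF ab]])
    then show "((\<lambda>t. (W a b * (X t a - X t b))^2) \<longlongrightarrow> 0) F"
      by (simp add: power2_eq_square algebra_simps)
  qed
  show "((\<lambda>t. Lp (X t) a) \<longlongrightarrow> 0) F" if "a \<in> V" for a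
    unfolding Lp_def by (rule tendsto_null_sum) (use e2 that in auto)
  have e3: "((\<lambda>t. X t y - X t z) \<longlongrightarrow> 0) F" if yz: "y \<in> V" "z \<in> V" "W y z > 0" for y z
  proof (rule sq_tendsto0)
    have "((\<lambda>t. (1 / W y z) * (W y z * (X t y - X t z)^2)) \<longlongrightarrow> (1 / W y z) * 0) F"
      by (rule tendsto_mult_left[OF e1[OF yz(1,2)]])
    then show "((\<lambda>t. (X t y - X t z)^2) \<longlongrightarrow> 0) F" using yz(3) by simp
  qed
  show "((\<lambda>t. X t a - X t b) \<longlongrightarrow> 0) F" if "a \<in> V" "b \<in> V" for a b
    by (rule conn_tendsto[OF e3 that]) auto
qed

end

locale flow = graph V W for V :: "'a set" and W +
  fixes g :: "'a \<Rightarrow> real \<Rightarrow> real" and Y Lam :: "real \<Rightarrow> 'a \<Rightarrow> real" and xs :: real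
  assumes g_cont: "\<And>v x. v \<in> V \<Longrightarrow> isCont (g v) x"
  and g_mono: "\<And>v x y. v \<in> V \<Longrightarrow> x \<le> y \<Longrightarrow> g v x \<le> g v y"
  and g_lip: "\<And>v R. v \<in> V \<Longrightarrow> \<exists>K. \<forall>x y. \<bar>x\<bar> \<le> R \<longrightarrow> \<bar>y\<bar> \<le> R \<longrightarrow> \<bar>g v x - g v y\<bar> \<le> K * \<bar>x - y\<bar>"
  and dY: "\<And>t v. t \<ge> 0 \<Longrightarrow> v \<in> V \<Longrightarrow> ((\<lambda>s. Y s v) has_real_derivative
            (- g v (Y t v) - Lp (Y t) v - Lp (Lam t) v)) (at t within {0..})"
  and dL: "\<And>t v. t \<ge> 0 \<Longrightarrow> v \<in> V \<Longrightarrow> ((\<lambda>s. Lam s v) has_real_derivative Lp (Y t) v) (at t within {0..})"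
  and xs: "(\<Sum>v\<in>V. g v xs) = 0"
begin

definition Vf where "Vf ys Ls t = (\<Sum>v\<in>V. ((Y t v - ys)^2 + (Lam t v - Ls v)^2) / 2)"
definition Pf where "Pf ys t = (\<Sum>v\<in>V. (Y t v - ys) * (g v (Y t v) - g v ys))"
definition Qf where "Qf t = (\<Sum>v\<in>V. Y t v * Lp (Y t) v)"

lemma mono_prod: "v \<in> V \<Longrightarrow> 0 \<le> (a - b) * (g v a - g v b)"
  using g_mono[of v a b] g_mono[of v b a]
  by (cases "a \<le> b") (auto intro: mult_nonpos_nonpos)

lemma Pf_nonneg: "0 \<le> Pf ys t"
  unfolding Pf_def by (intro sum_nonneg mono_prod)

lemma Qf_nonneg: "0 \<le> Qf t"
  unfolding Qf_def by (rule quad_nonneg)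

lemma Vf_nonneg: "0 \<le> Vf ys Ls t"
  unfolding Vf_def by (intro sum_nonneg) auto

lemma Vf_term: "v \<in> V \<Longrightarrow> (Y t v - ys)^2 + (Lam t v - Ls v)^2 \<le> 2 * Vf ys Ls t"
proof -
  assume v: "v \<in> V"
  have "((Y t v - ys)^2 + (Lam t v - Ls v)^2) / 2 \<le> Vf ys Ls t"
    unfolding Vf_def by (rule member_le_sum[OF v]) (auto simp: fin)
  then show ?thesis by simp
qed

lemma lyap_deriv:
  assumes sp: "\<And>v. v \<in> V \<Longrightarrow> g v ys + Lp Ls v = 0" and t: "t \<ge> 0"
  shows "((\<lambda>s. Vf ys Ls s) has_real_derivative - (Pf ys t + Qf t)) (at t within {0..})"
proof -
  define trm where "trm v = (Y t v - ys) * (- g v (Y t v) - Lp (Y t) v - Lp (Lam t) v) + (Lam t v - Ls v) * Lp (Y t) v" for v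
  have d: "((\<lambda>s. ((Y s v - ys)^2 + (Lam s v - Ls v)^2) / 2) has_real_derivative trm v) (at t within {0..})"
    if "v \<in> V" for v
    unfolding trm_def
    by (rule derivative_eq_intros dY[OF t that] dL[OF t that] refl | simp)+
  have D: "((\<lambda>s. Vf ys Ls s) has_real_derivative (\<Sum>v\<in>V. trm v)) (at t within {0..})"
    unfolding Vf_def by (rule DERIV_sum) (rule d)
  define dd where "dd = (\<lambda>u. Lam t u - Ls u)"
  have pt: "trm v = - ((Y t v - ys) * (g v (Y t v) - g v ys)) - (Y t v - ys) * Lp dd v
      - (Y t v - ys) * Lp (Y t) v + (Lam t v - Ls v) * Lp (Y t) v" if v: "v \<in> V" for v
  proof -
    have "Lp dd v = Lp (Lam t) v - Lp Ls v" unfolding dd_def by (rule Lp_diff)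
    then have eq: "Lp (Lam t) v = Lp dd v - g v ys" using sp[OF v] by simp
    show ?thesis unfolding trm_def eq by (simp add: algebra_simps)
  qed
  have A: "(\<Sum>v\<in>V. (Y t v - ys) * Lp dd v) = (\<Sum>v\<in>V. (Lam t v - Ls v) * Lp (Y t) v)"
  proof -
    have "(\<Sum>v\<in>V. (Y t v - ys) * Lp dd v) = (\<Sum>v\<in>V. dd v * Lp (\<lambda>u. Y t u - ys) v)"
      by (rule Lp_sym)
    also have "\<dots> = (\<Sum>v\<in>V. (Lam t v - Ls v) * Lp (Y t) v)"
      unfolding dd_def Lp_shift2 ..
    finally show ?thesis .
  qed
  have B: "(\<Sum>v\<in>V. (Y t v - ys) * Lp (Y t) v) = Qf t"
  proof -
    have "(\<Sum>v\<in>V. (Y t v - ys) * Lp (Y t) v) = Qf t - ys * (\<Sum>v\<in>V. Lp (Y t) v)"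
      unfolding Qf_def by (simp add: algebra_simps sum_subtractf sum_distrib_left)
    then show ?thesis using Lp_sum0 by simp
  qed
  have "(\<Sum>v\<in>V. trm v) = (\<Sum>v\<in>V. - ((Y t v - ys) * (g v (Y t v) - g v ys)) - (Y t v - ys) * Lp dd v
      - (Y t v - ys) * Lp (Y t) v + (Lam t v - Ls v) * Lp (Y t) v)"
    by (rule sum.cong) (auto simp: pt)
  also have "\<dots> = - Pf ys t - (\<Sum>v\<in>V. (Y t v - ys) * Lp dd v) - (\<Sum>v\<in>V. (Y t v - ys) * Lp (Y t) v)
      + (\<Sum>v\<in>V. (Lam t v - Ls v) * Lp (Y t) v)"
    unfolding Pf_def by (simp only: sum.distrib sum_subtractf sum_negf)
  also have "\<dots> = - (Pf ys t + Qf t)" unfolding A B by simp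
  finally show ?thesis using D by simp
qed

lemma Vf_decr:
  assumes sp: "\<And>v. v \<in> V \<Longrightarrow> g v ys + Lp Ls v = 0" and "0 \<le> s" "s \<le> t"
  shows "Vf ys Ls t \<le> Vf ys Ls s"
proof (rule decr[OF lyap_deriv[OF sp]])
  fix ta :: real
  have "0 \<le> Pf ys ta + Qf ta" by (rule add_nonneg_nonneg[OF Pf_nonneg Qf_nonneg])
  then show "- (Pf ys ta + Qf ta) \<le> 0" by linarith
qed (use assms in auto)

end



context flow begin

lemma converge:
  "\<exists>l Lsf. (\<forall>a\<in>V. ((\<lambda>t. Y t a) \<longlongrightarrow> l) at_top) \<and> (\<forall>a\<in>V. ((\<lambda>t. Lam t a) \<longlongrightarrow> Lsf a) at_top)
     \<and> (\<forall>a\<in>V. g a l + Lp Lsf a = 0) \<and> (\<Sum>a\<in>V. Lsf a) = (\<Sum>a\<in>V. Lam 0 a)"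
proof -
  have "(\<Sum>a\<in>V. - g a xs) = 0" using xs by (simp add: sum_negf)
  from solve[OF this] obtain Ls0 where Ls0: "\<forall>a\<in>V. Lp Ls0 a = - g a xs" by blast
  have sp0: "g v xs + Lp Ls0 v = 0" if "v \<in> V" for v using Ls0 that by simp
  define C0 where "C0 = Vf xs Ls0 0"
  have V1le: "Vf xs Ls0 t \<le> C0" if "t \<ge> 0" for t
    unfolding C0_def by (rule Vf_decr[OF sp0]) (use that in auto)
  define S where "S = (\<Sum>v\<in>V. \<bar>Ls0 v\<bar>)"
  have Sge: "\<bar>Ls0 v\<bar> \<le> S" if "v \<in> V" for v
    unfolding S_def by (rule member_le_sum[OF that]) (auto simp: fin)
  have C0nn: "C0 \<ge> 0" unfolding C0_def by (rule Vf_nonneg)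
  define R where "R = \<bar>xs\<bar> + S + 1 + 2 * C0"
  have S0: "S \<ge> 0" unfolding S_def by (intro sum_nonneg) auto
  have Ybd: "\<bar>Y t v\<bar> \<le> R" and Lbd: "\<bar>Lam t v\<bar> \<le> R" if "t \<ge> 0" "v \<in> V" for t v
  proof -
    have h: "(Y t v - xs)^2 + (Lam t v - Ls0 v)^2 \<le> 2 * C0"
      using Vf_term[OF that(2), of t xs Ls0] V1le[OF that(1)] by linarith
    have h1: "\<bar>Y t v - xs\<bar> \<le> 1 + 2 * C0"
      using abs_le_sq[of "Y t v - xs"] h zero_le_power2[of "Lam t v - Ls0 v"] by linarith
    have h2: "\<bar>Lam t v - Ls0 v\<bar> \<le> 1 + 2 * C0"
      using abs_le_sq[of "Lam t v - Ls0 v"] h zero_le_power2[of "Y t v - xs"] by linarith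
    show "\<bar>Y t v\<bar> \<le> R" using h1 S0 unfolding R_def by linarith
    show "\<bar>Lam t v\<bar> \<le> R" using h2 Sge[OF that(2)] unfolding R_def by linarith
  qed
  have xsbd: "\<bar>xs\<bar> \<le> R" and Rnn: "R \<ge> 0" and Ls0bd: "\<And>v. v \<in> V \<Longrightarrow> \<bar>Ls0 v\<bar> \<le> R"
    using S0 C0nn Sge unfolding R_def by (auto, fastforce)
  have "\<forall>v\<in>V. \<exists>K. \<forall>x y. \<bar>x\<bar> \<le> R \<longrightarrow> \<bar>y\<bar> \<le> R \<longrightarrow> \<bar>g v x - g v y\<bar> \<le> K * \<bar>x - y\<bar>"
    using g_lip by blast
  then obtain Kf where Kf: "\<And>v x y. v \<in> V \<Longrightarrow> \<bar>x\<bar> \<le> R \<Longrightarrow> \<bar>y\<bar> \<le> R \<Longrightarrow> \<bar>g v x - g v y\<bar> \<le> Kf v * \<bar>x - y\<bar>"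
    by metis
  define K where "K = (\<Sum>v\<in>V. \<bar>Kf v\<bar>)"
  have Knn: "K \<ge> 0" unfolding K_def by (intro sum_nonneg) auto
  have gl: "\<bar>g v x - g v y\<bar> \<le> K * \<bar>x - y\<bar>" if "v \<in> V" "\<bar>x\<bar> \<le> R" "\<bar>y\<bar> \<le> R" for v x y
  proof -
    have "Kf v \<le> K" unfolding K_def
      using member_le_sum[OF that(1), of "\<lambda>v. \<bar>Kf v\<bar>"] fin by fastforce
    then have "Kf v * \<bar>x - y\<bar> \<le> K * \<bar>x - y\<bar>" by (intro mult_right_mono) auto
    then show ?thesis using Kf[OF that] by linarith
  qed
  define G where "G = (\<Sum>v\<in>V. \<bar>g v 0\<bar>) + K * R"
  have gb: "\<bar>g v x\<bar> \<le> G" if "v \<in> V" "\<bar>x\<bar> \<le> R" for v x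
  proof -
    have "\<bar>g v 0\<bar> \<le> (\<Sum>v\<in>V. \<bar>g v 0\<bar>)" using member_le_sum[OF that(1), of "\<lambda>v. \<bar>g v 0\<bar>"] fin by fastforce
    moreover have "\<bar>g v x - g v 0\<bar> \<le> K * \<bar>x - 0\<bar>" using gl[OF that(1,2), of 0] Rnn by simp
    moreover have "K * \<bar>x\<bar> \<le> K * R" using that(2) Knn by (intro mult_left_mono) auto
    ultimately show ?thesis unfolding G_def by simp
  qed
  define B where "B = G + 4 * R * Wt"
  have LpY: "\<bar>Lp (Y t) a\<bar> \<le> 2 * R * Wt" if "t \<ge> 0" "a \<in> V" for t a
    by (rule Lp_bound[OF that(2)]) (use Ybd that in auto)
  have LpL: "\<bar>Lp (Lam t) a\<bar> \<le> 2 * R * Wt" if "t \<ge> 0" "a \<in> V" for t a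
    by (rule Lp_bound[OF that(2)]) (use Lbd that in auto)
  have Ylip: "\<bar>Y t v - Y s v\<bar> \<le> B * \<bar>t - s\<bar>" if "s \<ge> 0" "t \<ge> 0" "v \<in> V" for s t v
  proof (rule mvt_lip[of "\<lambda>s. Y s v" _ 0])
    show "\<bar>- g v (Y x v) - Lp (Y x) v - Lp (Lam x) v\<bar> \<le> B" if "x \<ge> 0" for x
      using gb[OF \<open>v \<in> V\<close> Ybd[OF that \<open>v \<in> V\<close>]] LpY[OF that \<open>v \<in> V\<close>] LpL[OF that \<open>v \<in> V\<close>]
      unfolding B_def by linarith
  qed (use dY that in auto)
  have Llip: "\<bar>Lam t v - Lam s v\<bar> \<le> B * \<bar>t - s\<bar>" if "s \<ge> 0" "t \<ge> 0" "v \<in> V" for s t v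
  proof (rule mvt_lip[of "\<lambda>s. Lam s v" _ 0])
    show "\<bar>Lp (Y x) v\<bar> \<le> B" if "x \<ge> 0" for x
    proof -
      have "0 \<le> R * Wt" using Wt_nonneg Rnn by simp
      then show ?thesis using gb[OF \<open>v \<in> V\<close> Ybd[OF that \<open>v \<in> V\<close>]] LpY[OF that \<open>v \<in> V\<close>]
        unfolding B_def by linarith
    qed
  qed (use dL that in auto)
  define n where "n = real (card V)"
  have nnn: "n \<ge> 0" unfolding n_def by simp
  define Kp where "Kp = n * (4 * K * R * B) + n * (4 * R * Wt * B)"
  have Bnn: "B \<ge> 0"
  proof -
    obtain v where "v \<in> V" using ne by blast
    then have "G \<ge> 0" using gb[of v 0] Rnn by fastforce
    then show ?thesis unfolding B_def using Rnn Wt_nonneg by simp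
  qed
  have Kpnn: "Kp \<ge> 0" unfolding Kp_def using nnn Knn Rnn Bnn Wt_nonneg by simp
  have Plip: "\<bar>Pf xs t - Pf xs s\<bar> \<le> n * (4 * K * R * B) * \<bar>t - s\<bar>" if st: "s \<ge> 0" "t \<ge> 0" for s t
  proof -
    have "\<bar>Pf xs t - Pf xs s\<bar> \<le> n * (4 * K * R * B * \<bar>t - s\<bar>)"
      unfolding Pf_def n_def
    proof (rule sum_diff_bound)
      fix v assume v: "v \<in> V"
      have a1: "\<bar>Y t v - Y s v\<bar> \<le> B * \<bar>t - s\<bar>" by (rule Ylip[OF st v])
      have a2: "\<bar>g v (Y t v) - g v xs\<bar> \<le> K * (2 * R)"
      proof -
        have "\<bar>g v (Y t v) - g v xs\<bar> \<le> K * \<bar>Y t v - xs\<bar>" by (rule gl[OF v Ybd[OF st(2) v] xsbd])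
        also have "\<dots> \<le> K * (2 * R)" using Ybd[OF st(2) v] xsbd Knn by (intro mult_left_mono) auto
        finally show ?thesis .
      qed
      have a3: "\<bar>Y s v - xs\<bar> \<le> 2 * R" using Ybd[OF st(1) v] xsbd by linarith
      have a4: "\<bar>g v (Y t v) - g v (Y s v)\<bar> \<le> K * (B * \<bar>t - s\<bar>)"
        using gl[OF v Ybd[OF st(2) v] Ybd[OF st(1) v]] a1 Knn
        by (meson mult_left_mono order_trans)
      have "\<bar>(Y t v - xs) * (g v (Y t v) - g v xs) - (Y s v - xs) * (g v (Y s v) - g v xs)\<bar>
          \<le> \<bar>(Y t v - xs) - (Y s v - xs)\<bar> * \<bar>g v (Y t v) - g v xs\<bar> + \<bar>Y s v - xs\<bar> * \<bar>(g v (Y t v) - g v xs) - (g v (Y s v) - g v xs)\<bar>"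
        by (rule prod_diff_bound)
      also have "\<dots> \<le> (B * \<bar>t - s\<bar>) * (K * (2 * R)) + (2 * R) * (K * (B * \<bar>t - s\<bar>))"
        using a1 a2 a3 a4 by (intro add_mono mult_mono) (auto simp: Bnn Knn Rnn)
      also have "\<dots> = 4 * K * R * B * \<bar>t - s\<bar>" by (simp add: algebra_simps)
      finally show "\<bar>(Y t v - xs) * (g v (Y t v) - g v xs) - (Y s v - xs) * (g v (Y s v) - g v xs)\<bar>
          \<le> 4 * K * R * B * \<bar>t - s\<bar>" .
    qed
    then show ?thesis by (simp add: algebra_simps)
  qed
  have Qlip: "\<bar>Qf t - Qf s\<bar> \<le> n * (4 * R * Wt * B) * \<bar>t - s\<bar>" if st: "s \<ge> 0" "t \<ge> 0" for s t
  proof -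
    have "\<bar>Qf t - Qf s\<bar> \<le> n * (4 * R * Wt * B * \<bar>t - s\<bar>)"
      unfolding Qf_def n_def
    proof (rule sum_diff_bound)
      fix v assume v: "v \<in> V"
      have a1: "\<bar>Y t v - Y s v\<bar> \<le> B * \<bar>t - s\<bar>" by (rule Ylip[OF st v])
      have a2: "\<bar>Lp (Y t) v\<bar> \<le> 2 * R * Wt" by (rule LpY[OF st(2) v])
      have a3: "\<bar>Y s v\<bar> \<le> R" by (rule Ybd[OF st(1) v])
      have a4: "\<bar>Lp (Y t) v - Lp (Y s) v\<bar> \<le> 2 * (B * \<bar>t - s\<bar>) * Wt"
      proof -
        have "Lp (Y t) v - Lp (Y s) v = Lp (\<lambda>u. Y t u - Y s u) v" by (rule Lp_diff[symmetric])
        also have "\<bar>\<dots>\<bar> \<le> 2 * (B * \<bar>t - s\<bar>) * Wt" by (rule Lp_bound[OF v]) (use Ylip st in auto)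
        finally show ?thesis .
      qed
      have "\<bar>Y t v * Lp (Y t) v - Y s v * Lp (Y s) v\<bar>
          \<le> \<bar>Y t v - Y s v\<bar> * \<bar>Lp (Y t) v\<bar> + \<bar>Y s v\<bar> * \<bar>Lp (Y t) v - Lp (Y s) v\<bar>"
        by (rule prod_diff_bound)
      also have "\<dots> \<le> (B * \<bar>t - s\<bar>) * (2 * R * Wt) + R * (2 * (B * \<bar>t - s\<bar>) * Wt)"
        using a1 a2 a3 a4 by (intro add_mono mult_mono) (auto simp: Bnn Wt_nonneg Rnn)
      also have "\<dots> = 4 * R * Wt * B * \<bar>t - s\<bar>" by (simp add: algebra_simps)
      finally show "\<bar>Y t v * Lp (Y t) v - Y s v * Lp (Y s) v\<bar> \<le> 4 * R * Wt * B * \<bar>t - s\<bar>" .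
    qed
    then show ?thesis by (simp add: algebra_simps)
  qed
  define phi where "phi t = Pf xs t + Qf t" for t
  have philip: "\<bar>phi t - phi s\<bar> \<le> Kp * \<bar>t - s\<bar>" if "s \<ge> 0" "t \<ge> 0" for s t
    using Plip[OF that] Qlip[OF that] unfolding phi_def Kp_def by (simp add: algebra_simps abs_triangle_ineq4 | linarith)+
  have phi0: "(phi \<longlongrightarrow> 0) at_top"
  proof (rule barbalat[of "Vf xs Ls0" phi Kp])
    show "((Vf xs Ls0) has_real_derivative - phi t) (at t within {0..})" if "t \<ge> 0" for t
      unfolding phi_def using lyap_deriv[OF sp0 that] by simp
  qed (use philip Kpnn Vf_nonneg Pf_nonneg Qf_nonneg in \<open>auto simp: phi_def add_nonneg_nonneg\<close>)
  have P0: "((\<lambda>t. Pf xs t) \<longlongrightarrow> 0) at_top"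
    by (rule sandwich0[OF phi0, of 0]) (use Pf_nonneg Qf_nonneg in \<open>auto simp: phi_def\<close>)
  have Q0: "((\<lambda>t. Qf t) \<longlongrightarrow> 0) at_top"
    by (rule sandwich0[OF phi0, of 0]) (use Pf_nonneg Qf_nonneg in \<open>auto simp: phi_def\<close>)
  have coco: "(g v a - g v b)^2 \<le> K * ((a - b) * (g v a - g v b))"
    if v: "v \<in> V" and ab: "\<bar>a\<bar> \<le> R" "\<bar>b\<bar> \<le> R" for v a b
  proof -
    have mp: "0 \<le> (a - b) * (g v a - g v b)" by (rule mono_prod[OF v])
    have l: "\<bar>g v a - g v b\<bar> \<le> K * \<bar>a - b\<bar>" by (rule gl[OF v ab])
    have "(g v a - g v b)^2 = \<bar>g v a - g v b\<bar> * \<bar>g v a - g v b\<bar>" by (simp add: power2_eq_square abs_mult_self_eq)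
    also have "\<dots> \<le> (K * \<bar>a - b\<bar>) * \<bar>g v a - g v b\<bar>" using l by (intro mult_right_mono) auto
    also have "\<dots> = K * \<bar>(a - b) * (g v a - g v b)\<bar>" by (simp add: abs_mult)
    also have "\<dots> = K * ((a - b) * (g v a - g v b))" using mp by simp
    finally show ?thesis .
  qed
  have gconv0: "((\<lambda>t. g v (Y t v) - g v xs) \<longlongrightarrow> 0) at_top" if v: "v \<in> V" for v
  proof (rule sq_tendsto0)
    have KP: "((\<lambda>t. K * Pf xs t) \<longlongrightarrow> 0) at_top" using tendsto_mult_left[OF P0, of K] by simp
    show "((\<lambda>t. (g v (Y t v) - g v xs)^2) \<longlongrightarrow> 0) at_top"
    proof (rule sandwich0[OF KP, of 0])
      fix t :: real assume t: "t \<ge> 0"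
      have "(Y t v - xs) * (g v (Y t v) - g v xs) \<le> Pf xs t"
        unfolding Pf_def by (rule member_le_sum[OF v]) (auto simp: fin mono_prod)
      then have "K * ((Y t v - xs) * (g v (Y t v) - g v xs)) \<le> K * Pf xs t" using Knn by (rule mult_left_mono)
      then show "(g v (Y t v) - g v xs)^2 \<le> K * Pf xs t" using coco[OF v Ybd[OF t v] xsbd] by linarith
    qed simp
  qed
  have LpY0: "((\<lambda>t. Lp (Y t) a) \<longlongrightarrow> 0) at_top" if "a \<in> V" for a
    using quad_tendsto(1)[of Y, OF Q0[unfolded Qf_def] that] .
  have Ydiff0: "((\<lambda>t. Y t a - Y t b) \<longlongrightarrow> 0) at_top" if "a \<in> V" "b \<in> V" for a b
    using quad_tendsto(2)[of Y, OF Q0[unfolded Qf_def] that] .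
  have u0: "((\<lambda>t. Lp (Lam t) a + g a xs) \<longlongrightarrow> 0) at_top" if a: "a \<in> V" for a
  proof -
    define u where "u t = Lp (Lam t) a + g a xs" for t
    have "\<forall>e>0. eventually (\<lambda>t. dist (u t) 0 < e) at_top"
    proof (intro allI impI)
      fix e :: real assume e: "e > 0"
      define T where "T = 6 * R / e + 1"
      have "6 * R / e \<ge> 0" using Rnn e by simp
      then have Tpos: "T > 0" unfolding T_def by linarith
      have RT: "2 * R < e / 3 * T"
      proof -
        have "e / 3 * T = 2 * R + e / 3" unfolding T_def using e by (simp add: field_simps)
        then show ?thesis using e by linarith
      qed
      define d where "d = e / (3 * T * (2 * Wt + 1))"
      have W1: "2 * Wt + 1 > 0" using Wt_nonneg by linarith
      have dpos: "d > 0" unfolding d_def using e Tpos W1 by simp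
      have dW: "2 * d * Wt \<le> e / (3 * T)"
      proof -
        have "2 * d * Wt = e / (3 * T) * (2 * Wt / (2 * Wt + 1))" unfolding d_def using W1 Tpos by (simp add: field_simps)
        also have "\<dots> \<le> e / (3 * T) * 1" using W1 e Tpos Wt_nonneg by (intro mult_left_mono) auto
        finally show ?thesis by simp
      qed
      have ev1: "eventually (\<lambda>s. \<bar>g a (Y s a) - g a xs\<bar> + \<bar>Lp (Y s) a\<bar> < e / 3) at_top"
      proof -
        have "((\<lambda>s. \<bar>g a (Y s a) - g a xs\<bar> + \<bar>Lp (Y s) a\<bar>) \<longlongrightarrow> 0 + 0) at_top"
          by (intro tendsto_add tendsto_rabs_zero gconv0[OF a] LpY0[OF a])
        from tendstoD[OF this, of "e / 3"] e
        have "eventually (\<lambda>s. dist (\<bar>g a (Y s a) - g a xs\<bar> + \<bar>Lp (Y s) a\<bar>) (0 + 0) < e / 3) at_top" by simp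
        then show ?thesis by (rule eventually_mono) (simp add: dist_real_def)
      qed
      have ev2: "eventually (\<lambda>s. \<forall>b\<in>V. \<bar>Lp (Y s) b\<bar> < d) at_top"
      proof (rule eventually_ball_finite[OF fin], intro ballI)
        fix b assume b: "b \<in> V"
        have "eventually (\<lambda>s. dist (Lp (Y s) b) 0 < d) at_top"
          using tendstoD[OF LpY0[OF b] dpos] .
        then show "eventually (\<lambda>s. \<bar>Lp (Y s) b\<bar> < d) at_top" by (simp add: dist_real_def)
      qed
      obtain N1 where N1: "\<And>s. s \<ge> N1 \<Longrightarrow> (\<bar>g a (Y s a) - g a xs\<bar> + \<bar>Lp (Y s) a\<bar> < e / 3) \<and> (\<forall>b\<in>V. \<bar>Lp (Y s) b\<bar> < d)"
        using eventually_conj[OF ev1 ev2] unfolding eventually_at_top_linorder by blast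
      define N where "N = max N1 0"
      have N0: "N \<ge> 0" unfolding N_def by simp
      have Lsmall: "\<bar>Lam t b - Lam s b\<bar> \<le> d * \<bar>t - s\<bar>" if st: "s \<ge> N" "t \<ge> N" and b: "b \<in> V" for s t b
      proof (rule mvt_lip[of "\<lambda>s. Lam s b" "\<lambda>r. Lp (Y r) b" N d s t])
        show "\<bar>Lp (Y x) b\<bar> \<le> d" if "x \<ge> N" for x using N1[of x] that b unfolding N_def by fastforce
      qed (use dL b st N0 in auto)
      have usmall: "\<bar>u t - u s\<bar> \<le> e / (3 * T) * \<bar>t - s\<bar>" if st: "s \<ge> N" "t \<ge> N" for s t
      proof -
        have "u t - u s = Lp (\<lambda>v. Lam t v - Lam s v) a" unfolding u_def Lp_diff by simp
        also have "\<bar>\<dots>\<bar> \<le> 2 * (d * \<bar>t - s\<bar>) * Wt" by (rule Lp_bound[OF a]) (use Lsmall st in auto)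
        also have "\<dots> = (2 * d * Wt) * \<bar>t - s\<bar>" by simp
        also have "\<dots> \<le> e / (3 * T) * \<bar>t - s\<bar>" using dW by (intro mult_right_mono) auto
        finally show ?thesis .
      qed
      show "eventually (\<lambda>t. dist (u t) 0 < e) at_top"
        unfolding eventually_at_top_linorder
      proof (intro exI allI impI)
        fix t assume tN: "t \<ge> N"
        then have t0: "t \<ge> 0" using N0 by linarith
        define h where "h s = Y s a + s * u t" for s
        define h' where "h' s = (- g a (Y s a) - Lp (Y s) a - Lp (Lam s) a) + 1 * u t" for s
        have hd: "(h has_real_derivative h' s) (at s within {0..})" if "s \<ge> 0" for s
          unfolding h_def h'_def by (intro DERIV_add dY[OF that a] DERIV_cmult_right DERIV_ident)
        have hb: "\<bar>h' s\<bar> \<le> 2 * e / 3" if s: "t \<le> s" "s \<le> t + T" for s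
        proof -
          have sN: "s \<ge> N" using s tN by linarith
          have "h' s = - (g a (Y s a) - g a xs) - Lp (Y s) a - (u s - u t)" unfolding h'_def u_def by simp
          then have "\<bar>h' s\<bar> \<le> (\<bar>g a (Y s a) - g a xs\<bar> + \<bar>Lp (Y s) a\<bar>) + \<bar>u s - u t\<bar>" by linarith
          moreover have "\<bar>g a (Y s a) - g a xs\<bar> + \<bar>Lp (Y s) a\<bar> < e / 3" using N1[of s] sN unfolding N_def by auto
          moreover have "\<bar>u s - u t\<bar> \<le> e / (3 * T) * \<bar>s - t\<bar>" by (rule usmall[OF tN sN])
          moreover have "e / (3 * T) * \<bar>s - t\<bar> \<le> e / (3 * T) * T" using s e Tpos by (intro mult_left_mono) auto
          moreover have "e / (3 * T) * T = e / 3" using Tpos by simp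
          ultimately show ?thesis by linarith
        qed
        have "\<bar>h (t + T) - h t\<bar> \<le> 2 * e / 3 * (t + T - t)"
          by (rule mvt_bound[OF t0 _ hd hb]) (use Tpos in auto)
        moreover have "h (t + T) - h t = (Y (t + T) a - Y t a) + T * u t" unfolding h_def by (simp add: algebra_simps)
        moreover have "\<bar>Y (t + T) a - Y t a\<bar> \<le> 2 * R" using Ybd[OF _ a, of t] Ybd[OF _ a, of "t + T"] t0 Tpos by auto
        ultimately have h1: "\<bar>(Y (t + T) a - Y t a) + T * u t\<bar> \<le> 2 * e / 3 * T"
          and h2: "\<bar>Y (t + T) a - Y t a\<bar> \<le> 2 * R" by simp_all
        have "T * \<bar>u t\<bar> = \<bar>((Y (t + T) a - Y t a) + T * u t) - (Y (t + T) a - Y t a)\<bar>"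
          using Tpos by (simp add: abs_mult)
        also have "\<dots> \<le> \<bar>(Y (t + T) a - Y t a) + T * u t\<bar> + \<bar>Y (t + T) a - Y t a\<bar>" by (rule abs_triangle_ineq4)
        finally have "T * \<bar>u t\<bar> \<le> 2 * R + 2 * e / 3 * T" using h1 h2 by linarith
        then have "T * \<bar>u t\<bar> < T * e" using RT by (simp add: algebra_simps)
        then have "\<bar>u t\<bar> < e" using Tpos by simp
        then show "dist (u t) 0 < e" by (simp add: dist_real_def)
      qed
    qed
    then show ?thesis unfolding tendsto_iff u_def .
  qed
  define dd where "dd t v = Lam t v - Ls0 v" for t v
  have Lpdd: "Lp (dd t) a = Lp (Lam t) a + g a xs" if a: "a \<in> V" for a t
  proof -
    have "Lp (dd t) a = Lp (Lam t) a - Lp Ls0 a" unfolding dd_def by (rule Lp_diff)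
    then show ?thesis using Ls0 a by simp
  qed
  have Lpdd0: "((\<lambda>t. Lp (dd t) a) \<longlongrightarrow> 0) at_top" if a: "a \<in> V" for a
    using u0[OF a] by (simp add: Lpdd[OF a])
  have ddq: "((\<lambda>t. \<Sum>a\<in>V. dd t a * Lp (dd t) a) \<longlongrightarrow> 0) at_top"
  proof (rule tendsto_null_sum)
    fix a assume a: "a \<in> V"
    have lim: "((\<lambda>t. 2 * R * \<bar>Lp (dd t) a\<bar>) \<longlongrightarrow> 0) at_top"
      using tendsto_mult_left[OF tendsto_rabs_zero[OF Lpdd0[OF a]], of "2 * R"] by simp
    have "((\<lambda>t. \<bar>dd t a * Lp (dd t) a\<bar>) \<longlongrightarrow> 0) at_top"
    proof (rule sandwich0[OF lim, of 0])
      fix t :: real assume t: "t \<ge> 0"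
      have "\<bar>dd t a\<bar> \<le> 2 * R" unfolding dd_def using Lbd[OF t a] Ls0bd[OF a] by linarith
      then show "\<bar>dd t a * Lp (dd t) a\<bar> \<le> 2 * R * \<bar>Lp (dd t) a\<bar>"
        by (simp add: abs_mult mult_right_mono)
    qed simp
    then show "((\<lambda>t. dd t a * Lp (dd t) a) \<longlongrightarrow> 0) at_top" using tendsto_rabs_zero_iff by blast
  qed
  have dddiff: "((\<lambda>t. dd t a - dd t b) \<longlongrightarrow> 0) at_top" if "a \<in> V" "b \<in> V" for a b
    using quad_tendsto(2)[of dd, OF ddq that] .
  define S0 where "S0 = (\<Sum>v\<in>V. Lam 0 v)"
  have sumconst: "(\<Sum>v\<in>V. Lam t v) = S0" if t: "t \<ge> 0" for t
  proof -
    have der: "((\<lambda>s. \<Sum>v\<in>V. Lam s v) has_real_derivative (\<Sum>v\<in>V. Lp (Y s) v)) (at s within {0..})"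
      if "s \<ge> 0" for s by (rule DERIV_sum) (rule dL[OF that])
    obtain x where "x \<in> {0..t}" "(\<Sum>v\<in>V. Lam t v) - (\<Sum>v\<in>V. Lam 0 v) = (\<Sum>v\<in>V. Lp (Y x) v) * (t - 0)"
      using mvt0[of 0 t _ "\<lambda>s. \<Sum>v\<in>V. Lp (Y s) v", OF _ t der] by auto
    then show ?thesis unfolding S0_def using Lp_sum0 by simp
  qed
  define nV where "nV = real (card V)"
  have nVpos: "nV > 0" unfolding nV_def using fin ne by (simp add: card_gt_0_iff)
  define Lsf where "Lsf v = Ls0 v + (S0 / nV - (\<Sum>b\<in>V. Ls0 b) / nV)" for v
  have Lamconv: "((\<lambda>t. Lam t a) \<longlongrightarrow> Lsf a) at_top" if a: "a \<in> V" for a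
  proof -
    have eq: "Lam t a - Lsf a = (\<Sum>b\<in>V. dd t a - dd t b) / nV" if t: "t \<ge> 0" for t
    proof -
      have "(\<Sum>b\<in>V. dd t a - dd t b) = nV * dd t a - (\<Sum>b\<in>V. dd t b)"
        unfolding nV_def by (simp add: sum_subtractf)
      also have "(\<Sum>b\<in>V. dd t b) = S0 - (\<Sum>b\<in>V. Ls0 b)"
        unfolding dd_def using sumconst[OF t] by (simp add: sum_subtractf)
      finally have "(\<Sum>b\<in>V. dd t a - dd t b) / nV = dd t a - S0 / nV + (\<Sum>b\<in>V. Ls0 b) / nV"
        using nVpos by (simp add: field_simps)
      then show ?thesis unfolding Lsf_def dd_def by simp
    qed
    have "((\<lambda>t. (\<Sum>b\<in>V. dd t a - dd t b) / nV) \<longlongrightarrow> 0) at_top"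
      by (intro tendsto_divide_zero tendsto_null_sum dddiff a)
    moreover have "eventually (\<lambda>t. (\<Sum>b\<in>V. dd t a - dd t b) / nV = Lam t a - Lsf a) at_top"
      unfolding eventually_at_top_linorder using eq by (intro exI[of _ 0]) auto
    ultimately have "((\<lambda>t. Lam t a - Lsf a) \<longlongrightarrow> 0) at_top" using tendsto_cong by fastforce
    then show ?thesis using LIM_zero_iff by blast
  qed
  have LpLsf: "Lp Lsf a = Lp Ls0 a" for a unfolding Lsf_def by (rule Lp_shift)
  have sumLsf: "(\<Sum>a\<in>V. Lsf a) = S0"
  proof -
    have "(\<Sum>a\<in>V. Lsf a) = (\<Sum>a\<in>V. Ls0 a) + nV * (S0 / nV - (\<Sum>b\<in>V. Ls0 b) / nV)"
      unfolding Lsf_def nV_def by (simp add: sum.distrib)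
    also have "\<dots> = S0" using nVpos by (simp add: field_simps)
    finally show ?thesis .
  qed
  obtain a0 where a0: "a0 \<in> V" using ne by blast
  obtain r where r: "strict_mono r" "monoseq (\<lambda>k. Y (real (r k)) a0)"
    using seq_monosub[of "\<lambda>k. Y (real k) a0"] by blast
  have "Bseq (\<lambda>k. Y (real (r k)) a0)" by (rule BseqI'[of _ R]) (use Ybd[OF _ a0] in auto)
  then have "convergent (\<lambda>k. Y (real (r k)) a0)" using Bseq_monoseq_convergent r(2) by blast
  then obtain l where l: "(\<lambda>k. Y (real (r k)) a0) \<longlonglongrightarrow> l" unfolding convergent_def by blast
  have rr: "filterlim (\<lambda>k. real (r k)) at_top sequentially"
    by (rule filterlim_compose[OF filterlim_real_sequentially filterlim_subseq[OF r(1)]])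
  have Ysub: "(\<lambda>k. Y (real (r k)) a) \<longlonglongrightarrow> l" if a: "a \<in> V" for a
  proof -
    have "(\<lambda>k. Y (real (r k)) a - Y (real (r k)) a0) \<longlonglongrightarrow> 0"
      by (rule filterlim_compose[OF Ydiff0[OF a a0] rr])
    from tendsto_add[OF this l] show ?thesis by simp
  qed
  have gleq: "g a l = g a xs" if a: "a \<in> V" for a
  proof -
    have A: "(\<lambda>k. g a (Y (real (r k)) a)) \<longlonglongrightarrow> g a l"
      by (rule isCont_tendsto_compose[OF g_cont[OF a] Ysub[OF a]])
    have "(\<lambda>k. g a (Y (real (r k)) a) - g a xs) \<longlonglongrightarrow> 0"
      by (rule filterlim_compose[OF gconv0[OF a] rr])
    then have B: "(\<lambda>k. g a (Y (real (r k)) a)) \<longlonglongrightarrow> g a xs" using LIM_zero_iff by blast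
    show ?thesis using LIMSEQ_unique[OF A B] .
  qed
  have Lsub: "(\<lambda>k. Lam (real (r k)) a) \<longlonglongrightarrow> Lsf a" if a: "a \<in> V" for a
    by (rule filterlim_compose[OF Lamconv[OF a] rr])
  have sp2: "g a l + Lp Lsf a = 0" if a: "a \<in> V" for a
    using gleq[OF a] LpLsf[of a] sp0[OF a] by simp
  have V2sub: "(\<lambda>k. Vf l Lsf (real (r k))) \<longlonglongrightarrow> 0"
    unfolding Vf_def
  proof (rule tendsto_null_sum)
    fix a assume a: "a \<in> V"
    have "(\<lambda>k. ((Y (real (r k)) a - l)^2 + (Lam (real (r k)) a - Lsf a)^2) / 2) \<longlonglongrightarrow> ((l - l)^2 + (Lsf a - Lsf a)^2) / 2"
      by (intro tendsto_intros Ysub[OF a] Lsub[OF a]) simp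
    then show "(\<lambda>k. ((Y (real (r k)) a - l)^2 + (Lam (real (r k)) a - Lsf a)^2) / 2) \<longlonglongrightarrow> 0" by simp
  qed
  have V2lim: "((\<lambda>t. Vf l Lsf t) \<longlongrightarrow> 0) at_top"
  proof (rule tendstoI)
    fix e :: real assume e: "e > 0"
    obtain k where k: "dist (Vf l Lsf (real (r k))) 0 < e"
      using tendstoD[OF V2sub e] unfolding eventually_sequentially by blast
    show "eventually (\<lambda>t. dist (Vf l Lsf t) 0 < e) at_top"
      unfolding eventually_at_top_linorder
    proof (intro exI allI impI)
      fix t assume t: "t \<ge> real (r k)"
      have "Vf l Lsf t \<le> Vf l Lsf (real (r k))" by (rule Vf_decr[OF sp2]) (use t in auto)
      then show "dist (Vf l Lsf t) 0 < e" using k Vf_nonneg[of l Lsf t] Vf_nonneg[of l Lsf "real (r k)"]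
        by (simp add: dist_real_def)
    qed
  qed
  have Yconv: "((\<lambda>t. Y t a) \<longlongrightarrow> l) at_top" if a: "a \<in> V" for a
  proof -
    have lim2: "((\<lambda>t. 2 * Vf l Lsf t) \<longlongrightarrow> 0) at_top" using tendsto_mult_left[OF V2lim, of 2] by simp
    have "((\<lambda>t. (Y t a - l)^2) \<longlongrightarrow> 0) at_top"
    proof (rule sandwich0[OF lim2, of 0])
      fix t :: real assume "t \<ge> 0"
      show "(Y t a - l)^2 \<le> 2 * Vf l Lsf t" using Vf_term[OF a, of t l Lsf] zero_le_power2[of "Lam t a - Lsf a"] by linarith
    qed simp
    then have "((\<lambda>t. Y t a - l) \<longlongrightarrow> 0) at_top" by (rule sq_tendsto0)
    then show ?thesis using LIM_zero_iff by blast
  qed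
  show ?thesis
    by (rule exI[of _ l], rule exI[of _ Lsf]) (use Yconv Lamconv sp2 sumLsf in \<open>auto simp: S0_def\<close>)
qed
end



lemma nodes_finite: "finite (nodes M N)"
proof (rule finite_subset)
  show "nodes M N \<subseteq> {0..(\<Sum>h\<in>{1..M}. N h)} \<times> {0..M}"
  proof
    fix x assume x: "x \<in> nodes M N"
    then obtain i h where xe: "x = (i, h)" and c: "1 \<le> h" "h \<le> M" "1 \<le> i" "i \<le> N h"
      unfolding nodes_def by auto
    have "N h \<le> (\<Sum>h\<in>{1..M}. N h)" by (rule member_le_sum) (use c in auto)
    then show "x \<in> {0..(\<Sum>h\<in>{1..M}. N h)} \<times> {0..M}" using xe c by auto
  qed
qed auto

lemma lap_eq:
  fixes V :: "node set" and w :: "nat \<Rightarrow> nat \<Rightarrow> nat \<Rightarrow> nat \<Rightarrow> real"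
  assumes fin: "finite V" and und: "ml_undirected V w" and a: "a \<in> V"
    and gr: "graph V (\<lambda>a b. w (fst a) (fst b) (snd a) (snd b))"
  shows "ml_laplacian V w T a = graph.Lp V (\<lambda>a b. w (fst a) (fst b) (snd a) (snd b)) T a"
proof -
  define W where "W a b = w (fst a) (fst b) (snd a) (snd b)" for a b :: node
  have sym: "W x y = W y x" if "x \<in> V" "y \<in> V" for x y
    using und that unfolding ml_undirected_def W_def by (cases x, cases y) fastforce
  obtain i h where ae: "a = (i, h)" by (cases a)
  have 1: "ml_laplacian V w T a = (\<Sum>b\<in>V. ((\<Sum>c\<in>V. W c a) * (if b = a then 1 else 0) - W a b) * T b)"
    unfolding ml_laplacian_def ae W_def by (simp add: case_prod_beta prod_eq_iff, intro sum.cong refl, auto)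
  have 2: "(\<Sum>b\<in>V. ((\<Sum>c\<in>V. W c a) * (if b = a then 1 else 0) - W a b) * T b)
      = (\<Sum>b\<in>V. (if b = a then (\<Sum>c\<in>V. W c a) * T b else 0)) - (\<Sum>b\<in>V. W a b * T b)"
    by (subst sum_subtractf[symmetric]) (rule sum.cong, auto simp: algebra_simps)
  have 3: "(\<Sum>b\<in>V. (if b = a then (\<Sum>c\<in>V. W c a) * T b else 0)) = (\<Sum>c\<in>V. W c a) * T a"
    using fin a by (simp add: sum.delta')
  have 4: "(\<Sum>c\<in>V. W c a) = (\<Sum>c\<in>V. W a c)" by (rule sum.cong) (use sym a in auto)
  have 5: "graph.Lp V W T a = (\<Sum>c\<in>V. W a c) * T a - (\<Sum>b\<in>V. W a b * T b)"
    unfolding graph.Lp_def[OF gr[folded W_def]] sum_distrib_right sum_subtractf[symmetric] by (rule sum.cong) (auto simp: algebra_simps)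
  show ?thesis using 1 2 3 4 5 unfolding W_def[symmetric] by simp
qed

theorem theorem2:
  fixes M :: nat and N :: "nat \<Rightarrow> nat"
    and w :: "nat \<Rightarrow> nat \<Rightarrow> nat \<Rightarrow> nat \<Rightarrow> real"
    and f :: "node \<Rightarrow> real \<Rightarrow> real"
    and Y Lam :: "real \<Rightarrow> tensor"
  assumes M_pos: "M \<ge> 1"
    and N_pos: "\<forall>h\<in>{1..M}. N h \<ge> 1"
    and w_nonneg: "\<forall>(i,h)\<in>nodes M N. \<forall>(j,k)\<in>nodes M N. w i j h k \<ge> 0"
    and undirected: "ml_undirected (nodes M N) w"
    and connected: "ml_connected (nodes M N) w"
    and C2: "\<forall>v\<in>nodes M N. \<exists>f' f''. (\<forall>x. (f v has_real_derivative f' x) (at x))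
                 \<and> (\<forall>x. (f' has_real_derivative f'' x) (at x)) \<and> continuous_on UNIV f''"
    and convex: "ftilde_convex (nodes M N) f"
    and primal_solvable: "\<exists>x. \<forall>z. (\<Sum>v\<in>nodes M N. f v x) \<le> (\<Sum>v\<in>nodes M N. f v z)"
    and dY: "\<forall>t\<ge>0. \<forall>v\<in>nodes M N. ((\<lambda>s. Y s v) has_real_derivative
               (- grad_ftilde f (Y t) v - ml_laplacian (nodes M N) w (Y t) v
                - ml_laplacian (nodes M N) w (Lam t) v)) (at t within {0..})"
    and dLam: "\<forall>t\<ge>0. \<forall>v\<in>nodes M N. ((\<lambda>s. Lam s v) has_real_derivative
               ml_laplacian (nodes M N) w (Y t) v) (at t within {0..})"
  shows "\<exists>Ys Ls xs Lbar.
           (\<forall>v\<in>nodes M N. ((\<lambda>t. Y t v) \<longlongrightarrow> Ys v) at_top)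
         \<and> (\<forall>v\<in>nodes M N. ((\<lambda>t. Lam t v) \<longlongrightarrow> Ls v) at_top)
         \<and> is_saddle_point (nodes M N) w f Ys Ls
         \<and> (\<forall>z. (\<Sum>v\<in>nodes M N. f v xs) \<le> (\<Sum>v\<in>nodes M N. f v z))
         \<and> (\<forall>v\<in>nodes M N. Ys v = xs * ones v)
         \<and> ml_inner (nodes M N) Lbar ones = 0
         \<and> (\<forall>v\<in>nodes M N. ml_laplacian (nodes M N) w Lbar v + grad_ftilde f Ys v = 0)
         \<and> (\<forall>v\<in>nodes M N. Ls v = Lbar v
               + ((\<Sum>u\<in>nodes M N. Lam 0 u) / real (card (nodes M N))) * ones v)"
proof -
  define V where "V = nodes M N"
  define W where "W a b = w (fst a) (fst b) (snd a) (snd b)" for a b :: node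
  define g where "g v = deriv (f v)" for v
  have fin: "finite V" unfolding V_def by (rule nodes_finite)
  have ne: "V \<noteq> {}"
  proof -
    have "N 1 \<ge> 1" using N_pos M_pos by auto
    then have "(1, 1) \<in> V" unfolding V_def nodes_def using M_pos by auto
    then show ?thesis by blast
  qed
  have sym: "W a b = W b a" if "a \<in> V" "b \<in> V" for a b
  proof -
    obtain i h j k where ab: "a = (i,h)" "b = (j,k)" by (cases a, cases b)
    have U: "\<forall>(i,h)\<in>V. \<forall>(j,k)\<in>V. w i j h k = w j i k h" using undirected unfolding ml_undirected_def V_def .
    have 1: "\<forall>(j',k')\<in>V. w i j' h k' = w j' i k' h" using bspec[OF U, of "(i,h)"] that ab by simp
    have "w i j h k = w j i k h" using bspec[OF 1, of "(j,k)"] that ab by simp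
    then show ?thesis unfolding W_def ab by simp
  qed
  have nonneg: "W a b \<ge> 0" if "a \<in> V" "b \<in> V" for a b
  proof -
    obtain i h j k where ab: "a = (i,h)" "b = (j,k)" by (cases a, cases b)
    have U: "\<forall>(i,h)\<in>V. \<forall>(j,k)\<in>V. w i j h k \<ge> 0" using w_nonneg unfolding V_def .
    have 1: "\<forall>(j',k')\<in>V. w i j' h k' \<ge> 0" using bspec[OF U, of "(i,h)"] that ab by simp
    have "w i j h k \<ge> 0" using bspec[OF 1, of "(j,k)"] that ab by simp
    then show ?thesis unfolding W_def ab by simp
  qed
  have conn: "(a, b) \<in> {(x,y). x \<in> V \<and> y \<in> V \<and> W x y > 0}\<^sup>*" if "a \<in> V" "b \<in> V" for a b
  proof -
    have "{((i,h),(j,k)). (i,h) \<in> V \<and> (j,k) \<in> V \<and> w i j h k > 0} = {(x,y). x \<in> V \<and> y \<in> V \<and> W x y > 0}"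
      unfolding W_def by auto
    moreover have "(a, b) \<in> {((i,h),(j,k)). (i,h) \<in> V \<and> (j,k) \<in> V \<and> w i j h k > 0}\<^sup>*"
      using connected that unfolding ml_connected_def V_def by blast
    ultimately show ?thesis by simp
  qed
  interpret G: graph V W by unfold_locales (use fin ne sym nonneg conn in auto)
  have lap: "ml_laplacian V w T a = G.Lp T a" if "a \<in> V" for T a
    using lap_eq[OF fin _ that, of w T] undirected G.graph_axioms unfolding V_def W_def by simp
  have fd: "(f v has_real_derivative g v x) (at x)" if v: "v \<in> V" for v x
  proof -
    obtain f' where "\<forall>x. (f v has_real_derivative f' x) (at x)" using C2 v unfolding V_def by blast
    then show ?thesis unfolding g_def using DERIV_imp_deriv by metis
  qed
  have gd: "\<exists>f''. (\<forall>x. (g v has_real_derivative f'' x) (at x)) \<and> continuous_on UNIV f''" if v: "v \<in> V" for v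
  proof -
    obtain f' f'' where h: "\<forall>x. (f v has_real_derivative f' x) (at x)"
      "\<forall>x. (f' has_real_derivative f'' x) (at x)" "continuous_on UNIV f''" using C2 v unfolding V_def by blast
    have "g v = f'" unfolding g_def using h(1) DERIV_imp_deriv by (metis ext)
    then show ?thesis using h by blast
  qed
  have cvx: "convex_on UNIV (f v)" if v: "v \<in> V" for v
  proof (rule convex_onI)
    fix t x y :: real assume t: "t > 0" "t < 1"
    define Y1 where "Y1 u = (if u = v then x else 0)" for u :: node
    define Z1 where "Z1 u = (if u = v then y else 0)" for u :: node
    have "ftilde V f (\<lambda>u. (1 - t) * Y1 u + t * Z1 u) \<le> (1 - t) * ftilde V f Y1 + t * ftilde V f Z1"
      using convex t unfolding ftilde_convex_def V_def by auto
    moreover have "ftilde V f (\<lambda>u. (1 - t) * Y1 u + t * Z1 u) = f v ((1 - t) * x + t * y) + (\<Sum>u\<in>V - {v}. f u 0)"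
      unfolding ftilde_def Y1_def Z1_def using fin v by (simp add: sum.remove)
    moreover have "ftilde V f Y1 = f v x + (\<Sum>u\<in>V - {v}. f u 0)"
      unfolding ftilde_def Y1_def using fin v by (simp add: sum.remove)
    moreover have "ftilde V f Z1 = f v y + (\<Sum>u\<in>V - {v}. f u 0)"
      unfolding ftilde_def Z1_def using fin v by (simp add: sum.remove)
    ultimately show "f v ((1 - t) *\<^sub>R x + t *\<^sub>R y) \<le> (1 - t) * f v x + t * f v y"
      by (simp add: algebra_simps)
  qed simp
  have tan: "f v z - f v x \<ge> g v x * (z - x)" if v: "v \<in> V" for v x z
    by (rule convex_on_imp_above_tangent[OF cvx[OF v]]) (auto simp: has_field_derivative_at_within[OF fd[OF v]])
  have g_mono: "g v x \<le> g v y" if v: "v \<in> V" and xy: "x \<le> y" for v x y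
  proof (cases "x = y")
    case False
    then have xy': "x < y" using xy by simp
    have "0 \<le> (g v y - g v x) * (y - x)" using tan[OF v, of x y] tan[OF v, of y x] by (simp add: algebra_simps)
    then show ?thesis using xy' by (simp add: zero_le_mult_iff)
  qed simp
  have g_cont: "isCont (g v) x" if v: "v \<in> V" for v x
    using gd[OF v] DERIV_isCont by blast
  have g_lip: "\<exists>K. \<forall>x y. \<bar>x\<bar> \<le> R \<longrightarrow> \<bar>y\<bar> \<le> R \<longrightarrow> \<bar>g v x - g v y\<bar> \<le> K * \<bar>x - y\<bar>" if v: "v \<in> V" for v R
  proof -
    obtain f'' where d2: "\<forall>x. (g v has_real_derivative f'' x) (at x)" and c: "continuous_on UNIV f''"
      using gd[OF v] by blast
    have "compact (f'' ` {-R..R})"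
      by (rule compact_continuous_image[OF continuous_on_subset[OF c] compact_Icc]) auto
    then obtain Bd where Bd: "\<forall>y\<in>f'' ` {-R..R}. norm y \<le> Bd" using compact_imp_bounded bounded_iff by metis
    show ?thesis
    proof (intro exI allI impI)
      fix x y :: real assume xy: "\<bar>x\<bar> \<le> R" "\<bar>y\<bar> \<le> R"
      have "norm (g v x - g v y) \<le> Bd * norm (x - y)"
      proof (rule field_differentiable_bound[of "{-R..R}" "g v" f''])
        show "(g v has_field_derivative f'' z) (at z within {-R..R})" for z
          using d2 has_field_derivative_at_within by blast
        show "norm (f'' z) \<le> Bd" if "z \<in> {-R..R}" for z using Bd that by blast
      qed (use xy in \<open>auto simp: abs_le_iff\<close>)
      then show "\<bar>g v x - g v y\<bar> \<le> Bd * \<bar>x - y\<bar>" by simp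
    qed
  qed
  obtain x0 where x0: "\<forall>z. (\<Sum>v\<in>V. f v x0) \<le> (\<Sum>v\<in>V. f v z)" using primal_solvable unfolding V_def by blast
  have xs: "(\<Sum>v\<in>V. g v x0) = 0"
  proof -
    have D: "((\<lambda>z. \<Sum>v\<in>V. f v z) has_real_derivative (\<Sum>v\<in>V. g v x0)) (at x0)"
      by (rule DERIV_sum) (rule fd)
    show ?thesis by (rule DERIV_local_min[OF D, of 1]) (use x0 in auto)
  qed
  have dY': "((\<lambda>s. Y s v) has_real_derivative (- g v (Y t v) - G.Lp (Y t) v - G.Lp (Lam t) v)) (at t within {0..})"
    if "t \<ge> 0" "v \<in> V" for t v
  proof -
    have "((\<lambda>s. Y s v) has_real_derivative (- grad_ftilde f (Y t) v - ml_laplacian V w (Y t) v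
          - ml_laplacian V w (Lam t) v)) (at t within {0..})" using dY that unfolding V_def by blast
    then show ?thesis unfolding lap[OF that(2)] grad_ftilde_def g_def .
  qed
  have dL': "((\<lambda>s. Lam s v) has_real_derivative G.Lp (Y t) v) (at t within {0..})"
    if "t \<ge> 0" "v \<in> V" for t v
  proof -
    have "((\<lambda>s. Lam s v) has_real_derivative ml_laplacian V w (Y t) v) (at t within {0..})"
      using dLam that unfolding V_def by blast
    then show ?thesis unfolding lap[OF that(2)] .
  qed
  interpret F: flow V W g Y Lam x0
    by unfold_locales (use g_cont g_mono g_lip dY' dL' xs in auto)
  obtain l Lsf where conv: "\<forall>a\<in>V. ((\<lambda>t. Y t a) \<longlongrightarrow> l) at_top" "\<forall>a\<in>V. ((\<lambda>t. Lam t a) \<longlongrightarrow> Lsf a) at_top"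
    and sp: "\<forall>a\<in>V. g a l + G.Lp Lsf a = 0" and sL: "(\<Sum>a\<in>V. Lsf a) = (\<Sum>a\<in>V. Lam 0 a)"
    using F.converge by blast
  define S0 where "S0 = (\<Sum>u\<in>V. Lam 0 u)"
  define nV where "nV = real (card V)"
  have nVpos: "nV > 0" unfolding nV_def using fin ne by (simp add: card_gt_0_iff)
  define Lbar where "Lbar v = Lsf v - S0 / nV" for v
  have sumg: "(\<Sum>v\<in>V. g v l) = 0"
  proof -
    have "(\<Sum>v\<in>V. g v l) = (\<Sum>v\<in>V. - G.Lp Lsf v)" by (rule sum.cong) (use sp in auto)
    also have "\<dots> = 0" using G.Lp_sum0 by (simp add: sum_negf)
    finally show ?thesis .
  qed
  have ftan: "ftilde V f Z \<ge> ftilde V f (\<lambda>v. l) + (\<Sum>v\<in>V. g v l * Z v)" for Z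
  proof -
    have "(\<Sum>v\<in>V. f v l + g v l * (Z v - l)) \<le> (\<Sum>v\<in>V. f v (Z v))"
    proof (rule sum_mono)
      fix v assume v: "v \<in> V"
      show "f v l + g v l * (Z v - l) \<le> f v (Z v)" using tan[OF v, of l "Z v"] by linarith
    qed
    moreover have "(\<Sum>v\<in>V. f v l + g v l * (Z v - l)) = ftilde V f (\<lambda>v. l) + (\<Sum>v\<in>V. g v l * Z v) - l * (\<Sum>v\<in>V. g v l)"
      unfolding ftilde_def by (simp add: sum.distrib sum_subtractf sum_distrib_left algebra_simps)
    ultimately show ?thesis using sumg unfolding ftilde_def by simp
  qed
  have lapc: "ml_laplacian V w (\<lambda>v. l) a = 0" if "a \<in> V" for a
    using lap[OF that] G.Lp_const by simp
  have inner0: "ml_inner V X (ml_laplacian V w (\<lambda>v. l)) = 0" for X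
    unfolding ml_inner_def by (simp add: lapc)
  have saddle: "is_saddle_point V w f (\<lambda>v. l) Lsf"
    unfolding is_saddle_point_def
  proof (intro allI conjI)
    fix Z Lm
    show "aug_lagrangian V w f (\<lambda>v. l) Lm \<le> aug_lagrangian V w f (\<lambda>v. l) Lsf"
      unfolding aug_lagrangian_def inner0 by simp
    have i1: "ml_inner V Lsf (ml_laplacian V w Z) = - (\<Sum>v\<in>V. g v l * Z v)"
    proof -
      have "ml_inner V Lsf (ml_laplacian V w Z) = (\<Sum>v\<in>V. Lsf v * G.Lp Z v)"
        unfolding ml_inner_def by (rule sum.cong) (auto simp: lap)
      also have "\<dots> = (\<Sum>v\<in>V. Z v * G.Lp Lsf v)" by (rule G.Lp_sym)
      also have "\<dots> = (\<Sum>v\<in>V. - (g v l * Z v))"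
      proof (rule sum.cong)
        fix v assume v: "v \<in> V"
        have "G.Lp Lsf v = - g v l" using sp v by (simp add: eq_neg_iff_add_eq_0 add.commute)
        then show "Z v * G.Lp Lsf v = - (g v l * Z v)" by simp
      qed simp
      finally show ?thesis by (simp add: sum_negf)
    qed
    have i2: "ml_inner V Z (ml_laplacian V w Z) \<ge> 0"
    proof -
      have "ml_inner V Z (ml_laplacian V w Z) = (\<Sum>v\<in>V. Z v * G.Lp Z v)"
        unfolding ml_inner_def by (rule sum.cong) (auto simp: lap)
      then show ?thesis using G.quad_nonneg by simp
    qed
    show "aug_lagrangian V w f (\<lambda>v. l) Lsf \<le> aug_lagrangian V w f Z Lsf"
      unfolding aug_lagrangian_def inner0 using i1 i2 ftan[of Z] by simp
  qed
  have minimizer: "(\<Sum>v\<in>V. f v l) \<le> (\<Sum>v\<in>V. f v z)" for z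
    using ftan[of "\<lambda>v. z"] sumg unfolding ftilde_def by (simp add: sum_distrib_right[symmetric])
  have inner_bar: "ml_inner V Lbar ones = 0"
    unfolding ml_inner_def ones_def Lbar_def using sL nVpos by (simp add: sum_subtractf S0_def nV_def)
  have lapbar: "ml_laplacian V w Lbar v + grad_ftilde f (\<lambda>v. l) v = 0" if v: "v \<in> V" for v
  proof -
    have "ml_laplacian V w Lbar v = G.Lp Lsf v" unfolding lap[OF v] Lbar_def by (rule G.Lp_shift2)
    moreover have "g v l + G.Lp Lsf v = 0" using sp v by blast
    ultimately show ?thesis unfolding grad_ftilde_def g_def by simp
  qed
  show ?thesis
    apply (rule exI[of _ "\<lambda>v. l"], rule exI[of _ Lsf], rule exI[of _ l], rule exI[of _ Lbar])
    using conv saddle minimizer inner_bar lapbar unfolding V_def[symmetric]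
    by (auto simp: ones_def Lbar_def S0_def nV_def)
qed


end
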